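(* Let $(c_n)_{n\geq1}$ be scalars, put $c_P=\prod_{\pi\in P}c_{\sharp\pi}$ for a set partition $P$, and $k_n=\sum_{P\in\operatorname{SP}(n),\ \operatorname{nc}(P)=I_n}c_P$ where $I_n=\{[n]\}$. Let $\kappa$ be the linear form on $\mathbf{H}^{nc}$ with $\kappa(I_n)=k_n$ for $n\geq1$ and $\kappa=0$ on every other noncrossing multipartition (including $\mathbf{1}$), and let $\phi\in(\mathbf{H}^{nc})^*$ be the solution of $\phi=\varepsilon_N+\kappa\prec\phi$. Let $\gamma$ be the linear form on $\mathbf{H}$ with $\gamma(Q)=c_Q$ if $Q$ is a partition of $[n]$ with $\operatorname{nc}(Q)=I_n$, and $\gamma=0$ on all other partitions and multipartitions. Then the solution $\psi\in\mathbf{H}^*$ of the half-shuffle fixpoint equation $$\psi=\varepsilon_{\mathbf H}+\gamma\prec\psi$$ satisfies $\phi=\psi\circ\operatorname{nc}^*$.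
   Context: $\operatorname{SP}(n)$ is the set of set partitions of $[n]$; $\operatorname{nc}(P)$ is the noncrossing closure (finest noncrossing partition coarser than $P$). A partition is noncrossing if there are no $a<c<b<d$ with $a,b$ in one block and $c,d$ in another. Partitions of finite linearly ordered sets are identified with partitions of $[n]$ via the order-preserving bijection. $\operatorname{Conv}(X)=\{\min X,\dots,\max X\}$; on blocks of $P$ put $\pi\to\rho$ iff $\operatorname{Conv}(\pi)\cap\rho\ne\emptyset$, transitively closed. Upperset $U$: ($\pi\in U,\pi\to\rho$)$\Rightarrow\rho\in U$; lowerset $L$: ($\pi\in L,\sigma\to\pi$)$\Rightarrow\sigma\in L$. A cut $(L,U)$ splits the blocks into a lowerset $L$ and its complement $U$; $L$ is identified with the restriction of $P$ to the union of its blocks; if $x_1<\dots<x_k$ are its elements let $D_0=\{y<x_1\}$, $D_i=\{x_i<y<x_{i+1}\}$, $D_k=\{y>x_k\}$, $U_i=P_{|D_i}$, and $\overline U$ the ordered product of the nonempty $U_i$. $\mathbf{H}$ is the free associative unital algebra on nonempty set partitions, with basis the multipartitions $P_1\cdots P_r$ (viewed as a partition of $[n_1+\dots+n_r]$ by shifting); cuts of multipartitions are tuples of cuts, $L=L_1\cdots L_r$, $\overline U=\overline{U_1}\cdots\overline{U_r}$. For nonempty $P$, $\Delta_\prec(P)=\sum_{\text{cuts},\,1\in L}L\otimes\overline U$ (the element $1$ lies in a block of $L$). The counit $\varepsilon_{\mathbf H}$ is $1$ on $\mathbf{1}$ and $0$ on nonempty multipartitions. For $f,g\in\mathbf{H}^*$,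 $f\prec g$ is the linear form with $(f\prec g)(\mathbf 1)=0$ and $(f\prec g)(x)=(f\otimes g)(\Delta_\prec(x))$ for $x$ in the span of nonempty multipartitions. $\mathbf{H}^{nc}$ is the sub-Hopf algebra spanned by noncrossing multipartitions, with the same structures and counit $\varepsilon_N$. $\operatorname{nc}^*:\mathbf{H}^{nc}\to\mathbf{H}$ is the algebra map with $\operatorname{nc}^*(P)=\sum_{P':\operatorname{nc}(P')=P}P'$ for noncrossing $P$. *)

theory Defs
  imports Main "HOL-Library.Disjoint_Sets"
begin

text \<open>A (nonempty) partition is recorded together with
  its size n as a pair (n, P).  A multipartition P_1 ... P_r is a list of such
  pairs; the empty list is the unit 1 of H.\<close>

type_synonym part = "nat \<times> nat set set"
type_synonym mpart = "part list"

definition is_part :: "part \<Rightarrow> bool" where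
  "is_part NP \<longleftrightarrow> fst NP \<ge> 1 \<and> partition_on {1..fst NP} (snd NP)"

definition is_mpart :: "mpart \<Rightarrow> bool" where
  "is_mpart M \<longleftrightarrow> (\<forall>NP\<in>set M. is_part NP)"

definition noncrossing :: "nat set set \<Rightarrow> bool" where
  "noncrossing P \<longleftrightarrow> \<not> (\<exists>B C a b c d. B \<in> P \<and> C \<in> P \<and> B \<noteq> C \<and>
      a \<in> B \<and> b \<in> B \<and> c \<in> C \<and> d \<in> C \<and> a < c \<and> c < b \<and> b < d)"

definition is_nc_mpart :: "mpart \<Rightarrow> bool" where
  "is_nc_mpart M \<longleftrightarrow> is_mpart M \<and> (\<forall>NP\<in>set M. noncrossing (snd NP))"

definition coarser :: "nat set set \<Rightarrow> nat set set \<Rightarrow> bool" where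
  "coarser Q P \<longleftrightarrow> (\<forall>B\<in>P. \<exists>C\<in>Q. B \<subseteq> C)"

definition nc :: "nat \<Rightarrow> nat set set \<Rightarrow> nat set set" where
  "nc n P = (THE Q. partition_on {1..n} Q \<and> noncrossing Q \<and> coarser Q P \<and>
       (\<forall>Q'. partition_on {1..n} Q' \<and> noncrossing Q' \<and> coarser Q' P \<longrightarrow> coarser Q' Q))"

definition rank :: "nat set \<Rightarrow> nat \<Rightarrow> nat" where
  "rank X x = card {y \<in> X. y \<le> x}"

text \<open>Restriction of P to X, identified with a partition of [card X].\<close>
definition restr :: "nat set set \<Rightarrow> nat set \<Rightarrow> part" where
  "restr P X = (card X, {rank X ` (B \<inter> X) | B. B \<in> P \<and> B \<inter> X \<noteq> {}})"

definition Conv :: "nat set \<Rightarrow> nat set" where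
  "Conv X = {Min X..Max X}"

definition arrow :: "nat set set \<Rightarrow> (nat set \<times> nat set) set" where
  "arrow P = {(\<pi>, \<rho>). \<pi> \<in> P \<and> \<rho> \<in> P \<and> Conv \<pi> \<inter> \<rho> \<noteq> {}}\<^sup>+"

definition is_lowerset :: "nat set set \<Rightarrow> nat set set \<Rightarrow> bool" where
  "is_lowerset P L \<longleftrightarrow> L \<subseteq> P \<and> (\<forall>\<pi>\<in>L. \<forall>\<sigma>\<in>P. (\<sigma>, \<pi>) \<in> arrow P \<longrightarrow> \<sigma> \<in> L)"

definition lowersets :: "nat set set \<Rightarrow> nat set set set" where
  "lowersets P = {L. is_lowerset P L}"

text \<open>The L-part of a cut (empty restriction = unit, omitted).\<close>
definition Lpart1 :: "part \<Rightarrow> nat set set \<Rightarrow> mpart" where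
  "Lpart1 NP L = (if L = {} then [] else [restr (snd NP) (\<Union>L)])"

text \<open>The U-bar part of a cut: with x_1<...<x_k the elements of the union of L,
  D_i is the open interval between consecutive boundaries 0, x_1, ..., x_k, n+1;
  U-bar is the ordered product of the restrictions to the nonempty D_i.\<close>
definition Ubar1 :: "part \<Rightarrow> nat set set \<Rightarrow> mpart" where
  "Ubar1 NP L = (let xs = sorted_list_of_set (\<Union>L);
                     bs = 0 # xs @ [fst NP + 1];
                     Ds = map (\<lambda>i. {bs ! i <..< bs ! (i + 1)}) [0..<length xs + 1]
                 in map (restr (snd NP)) (filter (\<lambda>D. D \<noteq> {}) Ds))"

definition Lpart :: "mpart \<Rightarrow> nat set set list \<Rightarrow> mpart" where
  "Lpart M Ls = concat (map2 Lpart1 M Ls)"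

definition Ubar :: "mpart \<Rightarrow> nat set set list \<Rightarrow> mpart" where
  "Ubar M Ls = concat (map2 Ubar1 M Ls)"

definition cuts1 :: "mpart \<Rightarrow> nat set set list set" where
  "cuts1 M = {Ls \<in> listset (map (\<lambda>NP. lowersets (snd NP)) M). 1 \<in> \<Union>(hd Ls)}"

text \<open>Half-shuffle product of linear forms (given by their values on the basis).\<close>
definition hs :: "(mpart \<Rightarrow> 'a::comm_ring_1) \<Rightarrow> (mpart \<Rightarrow> 'a) \<Rightarrow> mpart \<Rightarrow> 'a" where
  "hs f g M = (if M = [] then 0 else (\<Sum>Ls\<in>cuts1 M. f (Lpart M Ls) * g (Ubar M Ls)))"

definition eps :: "mpart \<Rightarrow> 'a::comm_ring_1" where
  "eps M = (if M = [] then 1 else 0)"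

definition cP :: "(nat \<Rightarrow> 'a::comm_ring_1) \<Rightarrow> nat set set \<Rightarrow> 'a" where
  "cP c P = (\<Prod>\<pi>\<in>P. c (card \<pi>))"

definition kcoef :: "(nat \<Rightarrow> 'a::comm_ring_1) \<Rightarrow> nat \<Rightarrow> 'a" where
  "kcoef c n = (\<Sum>P\<in>{P. partition_on {1..n} P \<and> nc n P = {{1..n}}}. cP c P)"

definition kappa :: "(nat \<Rightarrow> 'a::comm_ring_1) \<Rightarrow> mpart \<Rightarrow> 'a" where
  "kappa c M = (case M of [(n, P)] \<Rightarrow> if P = {{1..n}} then kcoef c n else 0 | _ \<Rightarrow> 0)"

definition gamma :: "(nat \<Rightarrow> 'a::comm_ring_1) \<Rightarrow> mpart \<Rightarrow> 'a" where
  "gamma c M = (case M of [(n, Q)] \<Rightarrow> if nc n Q = {{1..n}} then cP c Q else 0 | _ \<Rightarrow> 0)"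

text \<open>The basis elements occurring in nc^*(M) for a noncrossing multipartition M.\<close>
definition ncpre :: "mpart \<Rightarrow> mpart set" where
  "ncpre M = listset (map (\<lambda>(n, P). (\<lambda>Q. (n, Q)) ` {Q. partition_on {1..n} Q \<and> nc n Q = P}) M)"

end

theory Submission
  imports Defs
begin

definition cross :: "nat set \<Rightarrow> nat set \<Rightarrow> bool" where
  "cross A B \<longleftrightarrow> (\<exists>a b c d. a \<in> A \<and> b \<in> A \<and> c \<in> B \<and> d \<in> B \<and> a < c \<and> c < b \<and> b < d)"

lemma noncrossing_iff: "noncrossing P \<longleftrightarrow> (\<forall>B\<in>P. \<forall>C\<in>P. B \<noteq> C \<longrightarrow> \<not> cross B C)"
proof
  assume h: "noncrossing P"
  show "\<forall>B\<in>P. \<forall>C\<in>P. B \<noteq> C \<longrightarrow> \<not> cross B C"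
  proof (intro ballI impI notI)
    fix B C assume "B \<in> P" "C \<in> P" "B \<noteq> C" "cross B C"
    then obtain a b c d where "a \<in> B" "b \<in> B" "c \<in> C" "d \<in> C" "a < c" "c < b" "b < d"
      unfolding cross_def by blast
    with h \<open>B \<in> P\<close> \<open>C \<in> P\<close> \<open>B \<noteq> C\<close> show False unfolding noncrossing_def by blast
  qed
next
  assume h: "\<forall>B\<in>P. \<forall>C\<in>P. B \<noteq> C \<longrightarrow> \<not> cross B C"
  show "noncrossing P" unfolding noncrossing_def
  proof (intro notI, elim exE conjE)
    fix B C a b c d assume "B \<in> P" "C \<in> P" "B \<noteq> C" "a \<in> B" "b \<in> B" "c \<in> C" "d \<in> C" "a < c" "c < b" "b < d"
    then have "cross B C" unfolding cross_def by blast
    with h \<open>B \<in> P\<close> \<open>C \<in> P\<close> \<open>B \<noteq> C\<close> show False by blast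
  qed
qed

lemma cross_mono: "cross A B \<Longrightarrow> A \<subseteq> A' \<Longrightarrow> B \<subseteq> B' \<Longrightarrow> cross A' B'"
proof -
  assume "cross A B" "A \<subseteq> A'" "B \<subseteq> B'"
  then obtain a b c d where "a \<in> A" "b \<in> A" "c \<in> B" "d \<in> B" "a < c" "c < b" "b < d"
    unfolding cross_def by blast
  then show ?thesis using \<open>A \<subseteq> A'\<close> \<open>B \<subseteq> B'\<close> unfolding cross_def by blast
qed

definition cvx :: "nat set \<Rightarrow> bool" where
  "cvx D \<longleftrightarrow> (\<forall>a\<in>D. \<forall>b\<in>D. \<forall>x. a < x \<and> x < b \<longrightarrow> x \<in> D)"

lemma cvx_nocross:
  assumes "A \<subseteq> D" "cvx D" "B \<inter> D = {}"
  shows "\<not> cross A B" "\<not> cross B A"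
proof -
  show "\<not> cross A B"
  proof
    assume "cross A B"
    then obtain a b c d where "a \<in> A" "b \<in> A" "c \<in> B" "d \<in> B" "a < c" "c < b" "b < d"
      unfolding cross_def by blast
    then have "c \<in> D" using assms unfolding cvx_def by blast
    then show False using \<open>c \<in> B\<close> assms by blast
  qed
  show "\<not> cross B A"
  proof
    assume "cross B A"
    then obtain a b c d where "a \<in> B" "b \<in> B" "c \<in> A" "d \<in> A" "a < c" "c < b" "b < d"
      unfolding cross_def by blast
    then have "b \<in> D" using assms unfolding cvx_def by blast
    then show False using \<open>b \<in> B\<close> assms by blast
  qed
qed

definition img :: "(nat \<Rightarrow> nat) \<Rightarrow> nat set set \<Rightarrow> nat set set" where
  "img f P = (`) f ` P"

lemma crossI: "a \<in> A \<Longrightarrow> b \<in> A \<Longrightarrow> c \<in> B \<Longrightarrow> d \<in> B \<Longrightarrow> a < c \<Longrightarrow> c < b \<Longrightarrow> b < d \<Longrightarrow> cross A B"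
  unfolding cross_def by blast

lemma crossE:
  assumes "cross A B"
  obtains a b c d where "a \<in> A" "b \<in> A" "c \<in> B" "d \<in> B" "a < c" "c < b" "b < d"
  using assms unfolding cross_def by blast

lemma cross_img:
  assumes "strict_mono_on S f" "A \<subseteq> S" "B \<subseteq> S"
  shows "cross (f ` A) (f ` B) \<longleftrightarrow> cross A B"
proof
  assume "cross (f ` A) (f ` B)"
  then obtain a b c d where h: "a \<in> A" "b \<in> A" "c \<in> B" "d \<in> B" "f a < f c" "f c < f b" "f b < f d"
    by (elim crossE imageE) (simp only:)
  have S: "a \<in> S" "b \<in> S" "c \<in> S" "d \<in> S" using h assms(2,3) by auto
  have "a < c" using strict_mono_on_less[OF assms(1) S(1) S(3)] h(5) by simp
  moreover have "c < b" using strict_mono_on_less[OF assms(1) S(3) S(2)] h(6) by simp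
  moreover have "b < d" using strict_mono_on_less[OF assms(1) S(2) S(4)] h(7) by simp
  ultimately show "cross A B" using h by (intro crossI)
next
  assume "cross A B"
  then obtain a b c d where h: "a \<in> A" "b \<in> A" "c \<in> B" "d \<in> B" "a < c" "c < b" "b < d"
    by (elim crossE)
  have S: "a \<in> S" "b \<in> S" "c \<in> S" "d \<in> S" using h assms(2,3) by auto
  have "f a < f c" using strict_mono_on_less[OF assms(1) S(1) S(3)] h(5) by simp
  moreover have "f c < f b" using strict_mono_on_less[OF assms(1) S(3) S(2)] h(6) by simp
  moreover have "f b < f d" using strict_mono_on_less[OF assms(1) S(2) S(4)] h(7) by simp
  ultimately show "cross (f ` A) (f ` B)" using h by (metis crossI imageI)
qed

lemma noncrossing_img:
  assumes "strict_mono_on S f" "\<Union>P \<subseteq> S"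
  shows "noncrossing (img f P) \<longleftrightarrow> noncrossing P"
proof -
  have inj: "inj_on f S" using assms(1) strict_mono_on_imp_inj_on by blast
  have sub: "B \<subseteq> S" if "B \<in> P" for B using assms(2) that by blast
  have eq: "f ` B = f ` C \<longleftrightarrow> B = C" if "B \<in> P" "C \<in> P" for B C
    by (rule inj_on_image_eq_iff[OF inj]) (use sub that in blast)+
  show ?thesis unfolding noncrossing_iff img_def
  proof (intro iffI ballI impI)
    fix B C assume h: "\<forall>B\<in>(`) f ` P. \<forall>C\<in>(`) f ` P. B \<noteq> C \<longrightarrow> \<not> cross B C"
      and BC: "B \<in> P" "C \<in> P" "B \<noteq> C"
    then have "f ` B \<noteq> f ` C" using eq by simp
    moreover have fB: "f ` B \<in> (`) f ` P" and fC: "f ` C \<in> (`) f ` P" using BC by auto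
    ultimately have "\<not> cross (f ` B) (f ` C)" using bspec[OF bspec[OF h fB] fC] by simp
    then show "\<not> cross B C" using cross_img[OF assms(1) sub sub] BC by simp
  next
    fix B' C' assume h: "\<forall>B\<in>P. \<forall>C\<in>P. B \<noteq> C \<longrightarrow> \<not> cross B C"
      and "B' \<in> (`) f ` P" "C' \<in> (`) f ` P" "B' \<noteq> C'"
    then obtain B C where BC: "B \<in> P" "C \<in> P" "B' = f ` B" "C' = f ` C" by (auto simp only: image_iff)
    then have "B \<noteq> C" using \<open>B' \<noteq> C'\<close> by auto
    then have "\<not> cross B C" using h BC by simp
    then show "\<not> cross B' C'" using cross_img[OF assms(1) sub sub] BC by simp
  qed
qed

lemma inj_on_img_sub:
  assumes "inj_on f S" "A \<subseteq> S" "B \<subseteq> S"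
  shows "f ` A \<subseteq> f ` B \<longleftrightarrow> A \<subseteq> B"
proof
  assume h: "f ` A \<subseteq> f ` B"
  show "A \<subseteq> B"
  proof
    fix x assume "x \<in> A"
    then obtain y where "y \<in> B" "f x = f y" using h by blast
    then have "x = y" using assms \<open>x \<in> A\<close> unfolding inj_on_def by blast
    then show "x \<in> B" using \<open>y \<in> B\<close> by simp
  qed
qed (rule image_mono)

lemma coarser_img:
  assumes "inj_on f S" "\<Union>P \<subseteq> S" "\<Union>Q \<subseteq> S"
  shows "coarser (img f P) (img f Q) \<longleftrightarrow> coarser P Q"
proof -
  have sub: "B \<subseteq> S" if "B \<in> P \<or> B \<in> Q" for B using assms(2,3) that by blast
  have eq: "f ` B \<subseteq> f ` C \<longleftrightarrow> B \<subseteq> C" if "B \<in> Q" "C \<in> P" for B C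
    by (rule inj_on_img_sub[OF assms(1)]) (use sub that in blast)+
  show ?thesis unfolding coarser_def img_def
  proof
    assume h: "\<forall>B\<in>(`) f ` Q. \<exists>C\<in>(`) f ` P. B \<subseteq> C"
    show "\<forall>B\<in>Q. \<exists>C\<in>P. B \<subseteq> C"
    proof
      fix B assume "B \<in> Q"
      then have fB: "f ` B \<in> (`) f ` Q" by (rule imageI)
      obtain C' where "C' \<in> (`) f ` P" "f ` B \<subseteq> C'" using bspec[OF h fB] by (elim bexE)
      then obtain C where "C \<in> P" "C' = f ` C" by (elim imageE)
      then have "B \<subseteq> C" using eq[OF \<open>B \<in> Q\<close> \<open>C \<in> P\<close>] \<open>f ` B \<subseteq> C'\<close> by simp
      then show "\<exists>C\<in>P. B \<subseteq> C" using \<open>C \<in> P\<close> by blast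
    qed
  next
    assume h: "\<forall>B\<in>Q. \<exists>C\<in>P. B \<subseteq> C"
    show "\<forall>B\<in>(`) f ` Q. \<exists>C\<in>(`) f ` P. B \<subseteq> C"
    proof
      fix B' assume "B' \<in> (`) f ` Q"
      then obtain B where "B \<in> Q" "B' = f ` B" by (elim imageE)
      then obtain C where "C \<in> P" "B \<subseteq> C" using h by blast
      then have "f ` C \<in> (`) f ` P" "B' \<subseteq> f ` C" using \<open>B' = f ` B\<close> by auto
      then show "\<exists>C\<in>(`) f ` P. B' \<subseteq> C" by (intro bexI)
    qed
  qed
qed

lemma partition_img:
  assumes "inj_on f S" "partition_on S P"
  shows "partition_on (f ` S) (img f P)"
proof -
  have "partition_on (f ` S) ((`) f ` P - {{}})" by (rule partition_on_inj_image[OF assms(2,1)])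
  moreover have "(`) f ` P - {{}} = (`) f ` P" using assms(2) by (auto simp: partition_on_def)
  ultimately show ?thesis by (simp add: img_def)
qed

lemma img_img:
  assumes "\<And>x. x \<in> S \<Longrightarrow> g (f x) = x" "\<Union>P \<subseteq> S"
  shows "img g (img f P) = P"
proof -
  have "g ` f ` B = B" if "B \<in> P" for B
    using assms that by (force simp: image_image)
  then show ?thesis unfolding img_def by (simp add: image_image)
qed

lemma Union_img: "\<Union>(img f P) = f ` \<Union>P"
  by (auto simp: img_def)

definition ncspec :: "nat set \<Rightarrow> nat set set \<Rightarrow> nat set set \<Rightarrow> bool" where
  "ncspec A Q P \<longleftrightarrow> partition_on A P \<and> noncrossing P \<and> coarser P Q \<and>
     (\<forall>R. partition_on A R \<and> noncrossing R \<and> coarser R Q \<longrightarrow> coarser R P)"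

lemma coarser_antisym:
  assumes "partition_on A P" "partition_on A R" "coarser P R" "coarser R P"
  shows "P = R"
  using refines_asym[of A R P] assms unfolding refines_def coarser_def by blast

lemma ncspec_unique: "ncspec A Q P \<Longrightarrow> ncspec A Q P' \<Longrightarrow> P = P'"
  unfolding ncspec_def using coarser_antisym by metis

lemma partition_same_block:
  assumes "partition_on A R" "C \<in> R" "C' \<in> R" "x \<in> C" "x \<in> C'"
  shows "C = C'"
proof (rule ccontr)
  assume "C \<noteq> C'"
  then have "C \<inter> C' = {}" using partition_onD2[OF assms(1)] assms(2,3) unfolding disjoint_def by blast
  then show False using assms(4,5) by blast
qed

lemma partition_block_ex:
  assumes "partition_on A R" "x \<in> A"
  obtains C where "C \<in> R" "x \<in> C"
  using partition_onD1[OF assms(1)] assms(2) by blast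

lemma partition_sub:
  assumes "partition_on A R" "C \<in> R"
  shows "C \<subseteq> A"
  using partition_onD1[OF assms(1)] assms(2) by blast

lemma partition_nonempty:
  assumes "partition_on A R" "C \<in> R"
  obtains x where "x \<in> C"
  using partition_onD3[OF assms(1)] assms(2) by (metis ex_in_conv)

lemma ncspec_exists:
  assumes Q: "partition_on A Q"
  shows "\<exists>P. ncspec A Q P"
proof -
  define adm where "adm R \<longleftrightarrow> partition_on A R \<and> noncrossing R \<and> coarser R Q" for R
  define rel where "rel x y \<longleftrightarrow> x \<in> A \<and> y \<in> A \<and> (\<forall>R. adm R \<longrightarrow> (\<exists>C\<in>R. x \<in> C \<and> y \<in> C))" for x y
  define r where "r = {(x, y). rel x y}"
  have rI: "(x, y) \<in> r \<longleftrightarrow> rel x y" for x y by (simp add: r_def)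
  have relD: "\<exists>C\<in>R. x \<in> C \<and> y \<in> C" if "rel x y" "adm R" for x y R
    using that unfolding rel_def by blast
  have eq: "equiv A r"
  proof (rule equivI)
    show "r \<subseteq> A \<times> A" unfolding r_def rel_def by blast
    show "refl_on A r" unfolding refl_on_def
    proof (intro conjI ballI)
      fix x assume x: "x \<in> A"
      have "\<exists>C\<in>R. x \<in> C \<and> x \<in> C" if aR: "adm R" for R
      proof -
        have pR: "partition_on A R" using aR unfolding adm_def by blast
        obtain C where "C \<in> R" "x \<in> C" using partition_block_ex[OF pR x] by blast
        then show ?thesis by blast
      qed
      then show "(x, x) \<in> r" unfolding rI rel_def using x by blast
    qed
    show "sym r" unfolding sym_def rI rel_def by blast
    show "trans r" unfolding trans_def
    proof (intro allI impI)
      fix x y z assume "(x, y) \<in> r" "(y, z) \<in> r"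
      then have h: "rel x y" "rel y z" by (simp_all add: rI)
      have "\<exists>C\<in>R. x \<in> C \<and> z \<in> C" if R: "adm R" for R
      proof -
        obtain C where C: "C \<in> R" "x \<in> C" "y \<in> C" using relD[OF h(1) R] by blast
        obtain C' where C': "C' \<in> R" "y \<in> C'" "z \<in> C'" using relD[OF h(2) R] by blast
        have "C = C'" using partition_same_block[of A R C C' y] R C C' unfolding adm_def by blast
        then show ?thesis using C C' by blast
      qed
      then show "(x, z) \<in> r" using h unfolding rI rel_def by blast
    qed
  qed
  define P where "P = A // r"
  have part: "partition_on A P" unfolding P_def by (rule partition_on_quotient[OF eq])
  have cls: "B = r `` {x}" if h: "B \<in> P" "x \<in> B" for B x
  proof -
    obtain y where "y \<in> A" "B = r `` {y}" using h(1) unfolding P_def by (elim quotientE)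
    then have "(y, x) \<in> r" using h(2) by simp
    then show "B = r `` {x}" using \<open>B = r `` {y}\<close> equiv_class_eq[OF eq] by simp
  qed
  have nc: "noncrossing P"
    unfolding noncrossing_iff
  proof (intro ballI impI notI)
    fix B C assume BC: "B \<in> P" "C \<in> P" "B \<noteq> C" "cross B C"
    then obtain a b c d where abcd: "a \<in> B" "b \<in> B" "c \<in> C" "d \<in> C" "a < c" "c < b" "b < d"
      by (elim crossE)
    have B: "B = r `` {a}" using cls BC abcd by blast
    have C: "C = r `` {c}" using cls BC abcd by blast
    have ab: "rel a b" using B abcd rI by blast
    have cd: "rel c d" using C abcd rI by blast
    have "rel a c"
    proof -
      have "a \<in> A" "c \<in> A" using ab cd unfolding rel_def by blast+
      moreover have "\<exists>D\<in>R. a \<in> D \<and> c \<in> D" if R: "adm R" for R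
      proof -
        obtain D1 where D1: "D1 \<in> R" "a \<in> D1" "b \<in> D1" using relD[OF ab R] by blast
        obtain D2 where D2: "D2 \<in> R" "c \<in> D2" "d \<in> D2" using relD[OF cd R] by blast
        have "D1 = D2"
        proof (rule ccontr)
          assume "D1 \<noteq> D2"
          moreover have "cross D1 D2" by (rule crossI[of a D1 b c D2 d]) (use D1 D2 abcd in auto)
          moreover have "noncrossing R" using R unfolding adm_def by blast
          ultimately show False using D1(1) D2(1) unfolding noncrossing_iff by blast
        qed
        then show ?thesis using D1 D2 by blast
      qed
      ultimately show ?thesis unfolding rel_def by blast
    qed
    then have "(a, c) \<in> r" using rI by blast
    then have "B = C" using B C eq by (simp add: equiv_class_eq)
    with \<open>B \<noteq> C\<close> show False by simp
  qed
  have co: "coarser P Q"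
    unfolding coarser_def
  proof
    fix B assume "B \<in> Q"
    then obtain x where x: "x \<in> B" using partition_nonempty[OF Q] by blast
    have xA: "x \<in> A" using partition_sub[OF Q \<open>B \<in> Q\<close>] x by blast
    have "B \<subseteq> r `` {x}"
    proof
      fix y assume "y \<in> B"
      have "y \<in> A" using partition_sub[OF Q \<open>B \<in> Q\<close>] \<open>y \<in> B\<close> by blast
      moreover have "\<exists>C\<in>R. x \<in> C \<and> y \<in> C" if aR: "adm R" for R
      proof -
        obtain C where "C \<in> R" "B \<subseteq> C" using aR \<open>B \<in> Q\<close> unfolding adm_def coarser_def by blast
        then show ?thesis using x \<open>y \<in> B\<close> by blast
      qed
      ultimately have "rel x y" unfolding rel_def using xA by blast
      then show "y \<in> r `` {x}" using rI by blast
    qed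
    moreover have "r `` {x} \<in> P" unfolding P_def using xA by (rule quotientI)
    ultimately show "\<exists>C\<in>P. B \<subseteq> C" by blast
  qed
  have mn: "coarser R P" if R: "adm R" for R
    unfolding coarser_def
  proof
    fix B assume "B \<in> P"
    then obtain x where x: "x \<in> B" using partition_nonempty[OF part] by blast
    have "x \<in> A" using partition_sub[OF part \<open>B \<in> P\<close>] x by blast
    then obtain C where C: "C \<in> R" "x \<in> C" using R unfolding adm_def by (meson partition_block_ex)
    have "B \<subseteq> C"
    proof
      fix y assume "y \<in> B"
      then have "(x, y) \<in> r" using cls[OF \<open>B \<in> P\<close> x] by blast
      then have "rel x y" using rI by blast
      then obtain C' where C': "C' \<in> R" "x \<in> C'" "y \<in> C'" using relD R by blast
      then have "C' = C" using partition_same_block[of A R C' C x] R C unfolding adm_def by blast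
      then show "y \<in> C" using C' by simp
    qed
    then show "\<exists>C\<in>R. B \<subseteq> C" using C by blast
  qed
  have "ncspec A Q P" unfolding ncspec_def using part nc co mn unfolding adm_def by blast
  then show ?thesis by blast
qed

lemma nc_iff:
  assumes "partition_on {1..n} Q"
  shows "nc n Q = P \<longleftrightarrow> ncspec {1..n} Q P"
proof -
  obtain P0 where P0: "ncspec {1..n} Q P0" using ncspec_exists[OF assms] by blast
  have "nc n Q = (THE P. ncspec {1..n} Q P)" by (simp add: nc_def ncspec_def)
  also have "\<dots> = P0"
    by (rule the_equality) (use P0 ncspec_unique in auto)
  finally have "nc n Q = P0" .
  then show ?thesis using P0 ncspec_unique by blast
qed

lemma rank_mono: "finite S \<Longrightarrow> strict_mono_on S (rank S)"
proof (rule strict_mono_onI)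
  fix x y assume "finite S" "x \<in> S" "y \<in> S" "x < y"
  then have "{z \<in> S. z \<le> x} \<subseteq> {z \<in> S. z \<le> y}" "y \<in> {z \<in> S. z \<le> y}" "y \<notin> {z \<in> S. z \<le> x}" by auto
  then have "{z \<in> S. z \<le> x} \<subset> {z \<in> S. z \<le> y}" by blast
  then show "rank S x < rank S y" unfolding rank_def using \<open>finite S\<close> by (simp add: psubset_card_mono)
qed

lemma rank_range:
  assumes "finite S"
  shows "rank S ` S = {1..card S}"
proof -
  have inj: "inj_on (rank S) S" using rank_mono[OF assms] strict_mono_on_imp_inj_on by blast
  have sub: "rank S ` S \<subseteq> {1..card S}"
  proof
    fix k assume "k \<in> rank S ` S"
    then obtain x where "x \<in> S" "k = rank S x" by blast
    then have "x \<in> {z \<in> S. z \<le> x}" by simp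
    moreover have "finite {z \<in> S. z \<le> x}" using assms by simp
    ultimately have "card {z \<in> S. z \<le> x} > 0" using card_gt_0_iff by blast
    then have "1 \<le> k" using \<open>k = rank S x\<close> unfolding rank_def by simp
    moreover have "k \<le> card S"
    proof -
      have "{z \<in> S. z \<le> x} \<subseteq> S" by blast
      then show ?thesis using card_mono[OF assms] \<open>k = rank S x\<close> unfolding rank_def by blast
    qed
    ultimately show "k \<in> {1..card S}" by simp
  qed
  have "card (rank S ` S) = card S" using card_image[OF inj] .
  then show ?thesis using sub by (intro card_subset_eq) auto
qed

lemma rank_inj: "finite S \<Longrightarrow> inj_on (rank S) S"
  by (rule strict_mono_on_imp_inj_on[OF rank_mono])

lemma rank_bij: "finite S \<Longrightarrow> bij_betw (rank S) S {1..card S}"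
  unfolding bij_betw_def using rank_range[of S] rank_inj[of S] by simp

definition unrank :: "nat set \<Rightarrow> nat \<Rightarrow> nat" where
  "unrank S = the_inv_into S (rank S)"

lemma unrank_bij: "finite S \<Longrightarrow> bij_betw (unrank S) {1..card S} S"
  unfolding unrank_def by (rule bij_betw_the_inv_into[OF rank_bij])

lemma unrank_rank: "finite S \<Longrightarrow> x \<in> S \<Longrightarrow> unrank S (rank S x) = x"
  unfolding unrank_def by (rule the_inv_into_f_f[OF rank_inj])

lemma rank_unrank: "finite S \<Longrightarrow> k \<in> {1..card S} \<Longrightarrow> rank S (unrank S k) = k"
  unfolding unrank_def by (rule f_the_inv_into_f_bij_betw[OF rank_bij])

lemma unrank_in: "finite S \<Longrightarrow> k \<in> {1..card S} \<Longrightarrow> unrank S k \<in> S"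
  by (rule bij_betw_apply[OF unrank_bij])

lemma unrank_range: "finite S \<Longrightarrow> unrank S ` {1..card S} = S"
  by (rule bij_betw_imp_surj_on[OF unrank_bij])

lemma unrank_mono:
  assumes "finite S"
  shows "strict_mono_on {1..card S} (unrank S)"
proof (rule strict_mono_onI)
  fix k l assume kl: "k \<in> {1..card S}" "l \<in> {1..card S}" "k < l"
  show "unrank S k < unrank S l"
  proof (rule ccontr)
    assume "\<not> unrank S k < unrank S l"
    then have "unrank S l \<le> unrank S k" by simp
    moreover have "unrank S l \<in> S" "unrank S k \<in> S" using unrank_in[OF assms] kl by blast+
    ultimately have "rank S (unrank S l) \<le> rank S (unrank S k)"
      using strict_mono_on_less[OF rank_mono[OF assms]] by (metis le_less)
    then show False using rank_unrank[OF assms] kl by simp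
  qed
qed

lemma rank_id: "x \<in> {1..n} \<Longrightarrow> rank {1..n} x = x"
proof -
  assume "x \<in> {1..n}"
  then have "{y \<in> {1..n}. y \<le> x} = {1..x}" by auto
  then show ?thesis unfolding rank_def by simp
qed

definition tr :: "nat set set \<Rightarrow> nat set \<Rightarrow> nat set set" where
  "tr P S = (\<lambda>B. B \<inter> S) ` {B \<in> P. B \<inter> S \<noteq> {}}"

lemma restr_eq: "restr P X = (card X, img (rank X) (tr P X))"
  unfolding restr_def img_def tr_def image_image setcompr_eq_image by simp

lemma trI: "B \<in> P \<Longrightarrow> B \<inter> S \<noteq> {} \<Longrightarrow> B \<inter> S \<in> tr P S"
  unfolding tr_def by (rule imageI) simp

lemma trE:
  assumes "B' \<in> tr P S"
  obtains B where "B \<in> P" "B \<inter> S \<noteq> {}" "B' = B \<inter> S"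
proof -
  obtain B where "B \<in> {B \<in> P. B \<inter> S \<noteq> {}}" "B' = B \<inter> S" using assms unfolding tr_def by (elim imageE)
  then show ?thesis using that by blast
qed

lemma tr_alt: "tr P S = (\<inter>) S ` P - {{}}"
proof
  show "tr P S \<subseteq> (\<inter>) S ` P - {{}}"
  proof
    fix B' assume "B' \<in> tr P S"
    then obtain B where B: "B \<in> P" "B \<inter> S \<noteq> {}" "B' = B \<inter> S" by (elim trE)
    then have "B' = S \<inter> B" by blast
    then show "B' \<in> (\<inter>) S ` P - {{}}" using B by blast
  qed
  show "(\<inter>) S ` P - {{}} \<subseteq> tr P S"
  proof
    fix B' assume "B' \<in> (\<inter>) S ` P - {{}}"
    then obtain B where B: "B \<in> P" "B' = S \<inter> B" "B' \<noteq> {}" by blast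
    then have "B' = B \<inter> S" "B \<inter> S \<noteq> {}" by blast+
    then show "B' \<in> tr P S" using trI[OF B(1)] by simp
  qed
qed

lemma tr_partition:
  assumes "partition_on A P" "S \<subseteq> A"
  shows "partition_on S (tr P S)"
proof -
  have "partition_on (S \<inter> A) ((\<inter>) S ` P - {{}})" by (rule partition_on_restrict[OF assms(1)])
  moreover have "S \<inter> A = S" using assms(2) by blast
  ultimately show ?thesis by (simp add: tr_alt)
qed

lemma tr_nc:
  assumes "noncrossing P"
  shows "noncrossing (tr P S)"
  unfolding noncrossing_iff
proof (intro ballI impI notI)
  fix B' C' assume h: "B' \<in> tr P S" "C' \<in> tr P S" "B' \<noteq> C'" "cross B' C'"
  obtain B where B: "B \<in> P" "B' = B \<inter> S" using h(1) by (elim trE) simp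
  obtain C where C: "C \<in> P" "C' = C \<inter> S" using h(2) by (elim trE) simp
  have BC: "B \<in> P" "C \<in> P" "B' = B \<inter> S" "C' = C \<inter> S" using B C by simp_all
  then have "B \<noteq> C" using h(3) by blast
  moreover have "cross B C" using cross_mono[OF h(4)] BC by blast
  ultimately show False using assms BC unfolding noncrossing_iff by blast
qed

lemma tr_coarser:
  assumes "coarser P Q"
  shows "coarser (tr P S) (tr Q S)"
  unfolding coarser_def
proof
  fix C' assume "C' \<in> tr Q S"
  then obtain C where C: "C \<in> Q" "C \<inter> S \<noteq> {}" "C' = C \<inter> S" by (elim trE)
  then obtain B where B: "B \<in> P" "C \<subseteq> B" using assms unfolding coarser_def by blast
  then have "C' \<subseteq> B \<inter> S" "B \<inter> S \<noteq> {}" using C by blast+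
  moreover have "B \<inter> S \<in> tr P S" using B(1) calculation(2) by (rule trI)
  ultimately show "\<exists>B'\<in>tr P S. C' \<subseteq> B'" by blast
qed

lemma tr_sat:
  assumes "\<And>B. B \<in> P \<Longrightarrow> B \<subseteq> S \<or> B \<inter> S = {}" "{} \<notin> P"
  shows "tr P S = {B \<in> P. B \<subseteq> S}"
proof
  show "tr P S \<subseteq> {B \<in> P. B \<subseteq> S}"
  proof
    fix B' assume "B' \<in> tr P S"
    then obtain B where "B \<in> P" "B \<inter> S \<noteq> {}" "B' = B \<inter> S" by (elim trE)
    then have "B \<subseteq> S" using assms(1)[of B] by blast
    then have "B' = B" using \<open>B' = B \<inter> S\<close> by blast
    then show "B' \<in> {B \<in> P. B \<subseteq> S}" using \<open>B \<in> P\<close> \<open>B \<subseteq> S\<close> by simp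
  qed
  show "{B \<in> P. B \<subseteq> S} \<subseteq> tr P S"
  proof
    fix B assume "B \<in> {B \<in> P. B \<subseteq> S}"
    then have "B \<in> P" "B \<subseteq> S" "B \<noteq> {}" using assms(2) by auto
    then have "B \<inter> S = B" "B \<inter> S \<noteq> {}" by auto
    then have "B \<inter> S \<in> tr P S" using \<open>B \<in> P\<close> trI by blast
    then show "B \<in> tr P S" using \<open>B \<inter> S = B\<close> by simp
  qed
qed

lemma tr_full:
  assumes "partition_on A P"
  shows "tr P A = P"
proof -
  have "tr P A = {B \<in> P. B \<subseteq> A}"
    by (rule tr_sat) (use partition_sub[OF assms] partition_onD3[OF assms] in auto)
  also have "\<dots> = P" using partition_sub[OF assms] by blast
  finally show ?thesis .
qed

lemma ncspec_map:
  assumes f: "strict_mono_on S f" and sp: "ncspec S Q P" and Q: "partition_on S Q"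
  shows "ncspec (f ` S) (img f Q) (img f P)"
proof -
  define g where "g = the_inv_into S f"
  have inj: "inj_on f S" using f strict_mono_on_imp_inj_on by blast
  have gf: "g (f x) = x" if "x \<in> S" for x unfolding g_def using the_inv_into_f_f[OF inj that] .
  have fg: "f (g y) = y" if "y \<in> f ` S" for y unfolding g_def using f_the_inv_into_f[OF inj that] .
  have gS: "g ` f ` S = S" using gf by force
  have ginj: "inj_on g (f ` S)" using fg by (metis inj_on_inverseI)
  have gmono: "strict_mono_on (f ` S) g"
  proof (rule strict_mono_onI)
    fix y1 y2 assume "y1 \<in> f ` S" "y2 \<in> f ` S" "y1 < y2"
    then obtain x1 x2 where "x1 \<in> S" "x2 \<in> S" "y1 = f x1" "y2 = f x2" by blast
    then show "g y1 < g y2" using gf \<open>y1 < y2\<close> strict_mono_on_less[OF f] by auto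
  qed
  have P: "partition_on S P" "noncrossing P" "coarser P Q"
    and mn: "\<And>R. partition_on S R \<Longrightarrow> noncrossing R \<Longrightarrow> coarser R Q \<Longrightarrow> coarser R P"
    using sp unfolding ncspec_def by blast+
  have UP: "\<Union>P \<subseteq> S" using P(1) partition_onD1 by blast
  have UQ: "\<Union>Q \<subseteq> S" using Q partition_onD1 by blast
  have "partition_on (f ` S) (img f P)" by (rule partition_img[OF inj P(1)])
  moreover have "noncrossing (img f P)" using noncrossing_img[OF f UP] P(2) by simp
  moreover have "coarser (img f P) (img f Q)" using coarser_img[OF inj UP UQ] P(3) by simp
  moreover have "coarser R (img f P)"
    if R: "partition_on (f ` S) R" "noncrossing R" "coarser R (img f Q)" for R
  proof -
    have UR: "\<Union>R \<subseteq> f ` S" using R(1) partition_onD1 by blast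
    have UgR: "\<Union>(img g R) \<subseteq> S" using UR gS unfolding Union_img by blast
    have RR: "img f (img g R) = R" by (rule img_img[where S="f ` S" and g=f and f=g, OF fg UR])
    have QQ: "img g (img f Q) = Q" by (rule img_img[where S=S and g=g and f=f, OF gf UQ])
    have UfQ: "\<Union>(img f Q) \<subseteq> f ` S" using UQ unfolding Union_img by blast
    have "partition_on S (img g R)" using partition_img[OF ginj R(1)] gS by simp
    moreover have "noncrossing (img g R)" using noncrossing_img[OF gmono UR] R(2) by simp
    moreover have "coarser (img g R) Q"
      using coarser_img[OF ginj UR UfQ] R(3) QQ by simp
    ultimately have "coarser (img g R) P" using mn by blast
    then have "coarser (img f (img g R)) (img f P)" using coarser_img[OF inj UgR UP] by simp
    then show ?thesis using RR by simp
  qed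
  ultimately show ?thesis unfolding ncspec_def by blast
qed

lemma ncspec_map_iff:
  assumes f: "strict_mono_on S f" and Q: "partition_on S Q" and UP: "\<Union>P \<subseteq> S"
  shows "ncspec (f ` S) (img f Q) (img f P) \<longleftrightarrow> ncspec S Q P"
proof
  assume h: "ncspec (f ` S) (img f Q) (img f P)"
  define g where "g = the_inv_into S f"
  have inj: "inj_on f S" using f strict_mono_on_imp_inj_on by blast
  have gf: "g (f x) = x" if "x \<in> S" for x unfolding g_def using the_inv_into_f_f[OF inj that] .
  have gS: "g ` f ` S = S" using gf by force
  have gmono: "strict_mono_on (f ` S) g"
  proof (rule strict_mono_onI)
    fix y1 y2 assume "y1 \<in> f ` S" "y2 \<in> f ` S" "y1 < y2"
    then obtain x1 x2 where "x1 \<in> S" "x2 \<in> S" "y1 = f x1" "y2 = f x2" by blast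
    then show "g y1 < g y2" using gf \<open>y1 < y2\<close> strict_mono_on_less[OF f] by auto
  qed
  have UQ: "\<Union>Q \<subseteq> S" using Q partition_onD1 by blast
  have Q': "partition_on (f ` S) (img f Q)" by (rule partition_img[OF inj Q])
  have "ncspec (g ` f ` S) (img g (img f Q)) (img g (img f P))" by (rule ncspec_map[OF gmono h Q'])
  moreover have "img g (img f Q) = Q" by (rule img_img[where S=S and g=g and f=f, OF gf UQ])
  moreover have "img g (img f P) = P" by (rule img_img[where S=S and g=g and f=f, OF gf UP])
  ultimately show "ncspec S Q P" using gS by simp
next
  assume "ncspec S Q P"
  then show "ncspec (f ` S) (img f Q) (img f P)" by (rule ncspec_map[OF f _ Q])
qed

lemma nc_restr_iff:
  assumes "finite S" "partition_on S Q" "\<Union>P \<subseteq> S"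
  shows "nc (card S) (img (rank S) Q) = img (rank S) P \<longleftrightarrow> ncspec S Q P"
proof -
  have inj: "inj_on (rank S) S" using rank_mono[OF assms(1)] strict_mono_on_imp_inj_on by blast
  have "partition_on (rank S ` S) (img (rank S) Q)" by (rule partition_img[OF inj assms(2)])
  then have p: "partition_on {1..card S} (img (rank S) Q)" using rank_range[OF assms(1)] by simp
  show ?thesis
    using nc_iff[OF p] ncspec_map_iff[OF rank_mono[OF assms(1)] assms(2,3)] rank_range[OF assms(1)] by simp
qed

definition gl :: "nat \<Rightarrow> nat set \<Rightarrow> nat set list" where
  "gl n X = (let xs = sorted_list_of_set X;
                 bs = 0 # xs @ [n + 1];
                 Ds = map (\<lambda>i. {bs ! i <..< bs ! (i + 1)}) [0..<length xs + 1]
             in filter (\<lambda>D. D \<noteq> {}) Ds)"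

lemma Ubar1_gl: "Ubar1 NP L = map (restr (snd NP)) (gl (fst NP) (\<Union>L))"
  unfolding Ubar1_def gl_def Let_def by simp

definition bsl :: "nat \<Rightarrow> nat set \<Rightarrow> nat list" where
  "bsl n X = 0 # sorted_list_of_set X @ [n + 1]"

definition gall :: "nat \<Rightarrow> nat set \<Rightarrow> nat set list" where
  "gall n X = map (\<lambda>i. {bsl n X ! i <..< bsl n X ! Suc i}) [0..<card X + 1]"

lemma gl_gall: "finite X \<Longrightarrow> gl n X = filter (\<lambda>D. D \<noteq> {}) (gall n X)"
  unfolding gl_def gall_def bsl_def Let_def by simp

lemma strict_sorted_nth_less_iff:
  assumes "sorted_wrt (<) (xs :: nat list)" "i < length xs" "j < length xs"
  shows "xs ! i < xs ! j \<longleftrightarrow> i < j"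
proof
  assume h: "xs ! i < xs ! j"
  show "i < j"
  proof (rule ccontr)
    assume "\<not> i < j"
    then have "j < i \<or> j = i" by auto
    then show False
    proof
      assume "j < i"
      then have "xs ! j < xs ! i" using sorted_wrt_nth_less[OF assms(1) _ assms(2)] by blast
      then show False using h by simp
    qed (use h in simp)
  qed
next
  assume "i < j"
  then show "xs ! i < xs ! j" using sorted_wrt_nth_less[OF assms(1) _ assms(3)] by blast
qed

context
  fixes n :: nat and X :: "nat set"
  assumes X: "X \<subseteq> {1..n}"
begin

lemma X_fin: "finite X"
  using X finite_subset by blast

lemma bsl_sorted: "sorted_wrt (<) (bsl n X)"
proof -
  have s: "sorted_wrt (<) (sorted_list_of_set X)" by (rule strict_sorted_list_of_set)
  have set: "set (sorted_list_of_set X) = X" using X_fin by simp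
  show ?thesis unfolding bsl_def using s set X by (auto simp: sorted_wrt_append)
qed

lemma bsl_length: "length (bsl n X) = card X + 2"
  unfolding bsl_def using X_fin by simp

lemma bsl_set: "set (bsl n X) = insert 0 (insert (n + 1) X)"
  unfolding bsl_def using X_fin by auto

lemma bsl_0: "bsl n X ! 0 = 0"
  unfolding bsl_def by simp

lemma bsl_last: "bsl n X ! (card X + 1) = n + 1"
  unfolding bsl_def using X_fin by (simp add: nth_append)

lemma bsl_mid: "i < card X \<Longrightarrow> bsl n X ! Suc i \<in> X"
proof -
  assume "i < card X"
  then have "bsl n X ! Suc i = sorted_list_of_set X ! i" unfolding bsl_def using X_fin by (simp add: nth_append)
  moreover have "i < length (sorted_list_of_set X)" using \<open>i < card X\<close> by simp
  then have "sorted_list_of_set X ! i \<in> set (sorted_list_of_set X)" by (rule nth_mem)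
  ultimately show ?thesis using X_fin by simp
qed

lemma bsl_le: "i < length (bsl n X) \<Longrightarrow> bsl n X ! i \<le> n + 1"
proof -
  assume "i < length (bsl n X)"
  then have "bsl n X ! i \<in> set (bsl n X)" by simp
  then show ?thesis using bsl_set X by auto
qed

lemma gall_nth: "i < card X + 1 \<Longrightarrow> gall n X ! i = {bsl n X ! i <..< bsl n X ! Suc i}"
  unfolding gall_def by (simp del: upt_Suc)

lemma gall_length: "length (gall n X) = card X + 1"
  unfolding gall_def by simp

lemma gall_props:
  assumes "D \<in> set (gall n X)"
  shows "D \<subseteq> {1..n}" "D \<inter> X = {}" "cvx D"
proof -
  obtain i where i: "i < card X + 1" "D = gall n X ! i" using assms gall_length by (metis in_set_conv_nth)
  then have D: "D = {bsl n X ! i <..< bsl n X ! Suc i}" using gall_nth by simp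
  have le: "bsl n X ! Suc i \<le> n + 1" using bsl_le bsl_length i by simp
  show "D \<subseteq> {1..n}" using D le by auto
  show "cvx D" unfolding cvx_def D by auto
  show "D \<inter> X = {}"
  proof (rule ccontr)
    assume "D \<inter> X \<noteq> {}"
    then obtain x where x: "x \<in> D" "x \<in> X" by blast
    then have "x \<in> set (bsl n X)" using bsl_set by simp
    then obtain k where k: "k < length (bsl n X)" "bsl n X ! k = x" by (metis in_set_conv_nth)
    have "bsl n X ! i < bsl n X ! k" "bsl n X ! k < bsl n X ! Suc i" using x(1) D k by auto
    then have "i < k" "k < Suc i"
      using strict_sorted_nth_less_iff[OF bsl_sorted] k(1) bsl_length i by auto
    then show False by simp
  qed
qed

definition gsep :: "nat set \<Rightarrow> nat set \<Rightarrow> bool" where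
  "gsep A B \<longleftrightarrow> (\<forall>a\<in>A. \<forall>b\<in>B. \<exists>x\<in>X. a < x \<and> x < b)"

lemma gall_sorted: "sorted_wrt gsep (gall n X)"
  unfolding sorted_wrt_iff_nth_less gsep_def
proof (intro allI impI ballI)
  fix i j a b assume ij: "i < j" "j < length (gall n X)" and a: "a \<in> gall n X ! i" and b: "b \<in> gall n X ! j"
  have jl: "j < card X + 1" using ij gall_length by simp
  have a': "a < bsl n X ! Suc i" using a gall_nth[of i] ij jl by simp
  have b': "bsl n X ! j < b" using b gall_nth[of j] jl by simp
  have "bsl n X ! Suc i \<le> bsl n X ! j"
  proof (cases "Suc i = j")
    case False
    then have "Suc i < j" using ij by simp
    then show ?thesis using sorted_wrt_nth_less[OF bsl_sorted, of "Suc i" j] bsl_length jl by simp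
  qed simp
  moreover have "bsl n X ! Suc i \<in> X" using bsl_mid ij jl by simp
  ultimately show "\<exists>x\<in>X. a < x \<and> x < b" using a' b' by (meson le_less_trans)
qed

lemma straddle:
  fixes xs :: "nat list"
  assumes "sorted_wrt (<) xs" "xs \<noteq> []" "xs ! 0 < y" "y < last xs" "y \<notin> set xs"
  shows "\<exists>i. Suc i < length xs \<and> xs ! i < y \<and> y < xs ! Suc i"
  using assms
proof (induction xs)
  case Nil
  then show ?case by simp
next
  case (Cons x xs)
  show ?case
  proof (cases xs)
    case Nil
    then show ?thesis using Cons.prems by simp
  next
    case (Cons z zs)
    show ?thesis
    proof (cases "y < z")
      case True
      then show ?thesis using Cons Cons.prems(3) by auto
    next
      case False
      then have "z < y" using Cons.prems(5) Cons by auto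
      have "sorted_wrt (<) xs" using Cons.prems(1) by simp
      moreover have "xs ! 0 < y" using \<open>z < y\<close> Cons by simp
      moreover have "y < last xs" using Cons.prems(4) Cons by simp
      moreover have "y \<notin> set xs" using Cons.prems(5) by simp
      ultimately obtain i where "Suc i < length xs" "xs ! i < y" "y < xs ! Suc i"
        using Cons.IH Cons by blast
      then show ?thesis by (intro exI[of _ "Suc i"]) simp
    qed
  qed
qed

lemma gall_cover:
  assumes "y \<in> {1..n}" "y \<notin> X"
  shows "\<exists>D\<in>set (gall n X). y \<in> D"
proof -
  have ne: "bsl n X \<noteq> []" unfolding bsl_def by simp
  have last: "last (bsl n X) = n + 1" unfolding bsl_def by simp
  have "y \<notin> set (bsl n X)" using assms bsl_set by auto
  moreover have "bsl n X ! 0 < y" "y < last (bsl n X)" using assms bsl_0 last by auto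
  ultimately obtain i where i: "Suc i < length (bsl n X)" "bsl n X ! i < y" "y < bsl n X ! Suc i"
    using straddle[OF bsl_sorted ne] by blast
  then have il: "i < card X + 1" using bsl_length by simp
  then have "y \<in> gall n X ! i" using gall_nth i by simp
  moreover have "gall n X ! i \<in> set (gall n X)" using il gall_length by simp
  ultimately show ?thesis by blast
qed

lemma gl_props:
  assumes "D \<in> set (gl n X)"
  shows "D \<noteq> {}" "D \<subseteq> {1..n}" "D \<inter> X = {}" "cvx D"
  using assms gall_props[of D] gl_gall[OF X_fin] by auto

lemma gl_sorted: "sorted_wrt gsep (gl n X)"
  unfolding gl_gall[OF X_fin] by (rule sorted_wrt_filter[OF gall_sorted])

lemma gl_sep:
  assumes "i < j" "j < length (gl n X)" "a \<in> gl n X ! i" "b \<in> gl n X ! j"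
  shows "\<exists>x\<in>X. a < x \<and> x < b"
  using sorted_wrt_nth_less[OF gl_sorted assms(1,2)] assms(3,4) unfolding gsep_def by blast

lemma gl_cover:
  assumes "y \<in> {1..n}" "y \<notin> X"
  shows "\<exists>D\<in>set (gl n X). y \<in> D"
  using gall_cover[OF assms] gl_gall[OF X_fin] by auto

lemma gl_nth_disj:
  assumes "i < length (gl n X)" "j < length (gl n X)" "i \<noteq> j"
  shows "gl n X ! i \<inter> gl n X ! j = {}"
proof (rule ccontr)
  assume "gl n X ! i \<inter> gl n X ! j \<noteq> {}"
  then obtain y where y: "y \<in> gl n X ! i" "y \<in> gl n X ! j" by blast
  show False
  proof (cases "i < j")
    case True
    then show False using gl_sep[OF True assms(2) y(1) y(2)] by auto
  next
    case False
    then have "j < i" using assms(3) by simp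
    then show False using gl_sep[OF _ assms(1) y(2) y(1)] by auto
  qed
qed

lemma gl_distinct: "distinct (gl n X)"
  unfolding distinct_conv_nth
proof (intro allI impI)
  fix i j assume h: "i < length (gl n X)" "j < length (gl n X)" "i \<noteq> j"
  have "gl n X ! i \<noteq> {}" using gl_props(1) h(1) by simp
  then show "gl n X ! i \<noteq> gl n X ! j" using gl_nth_disj[OF h] by blast
qed

lemma gl_disj:
  assumes "D \<in> set (gl n X)" "D' \<in> set (gl n X)" "D \<noteq> D'"
  shows "D \<inter> D' = {}"
proof -
  obtain i where i: "i < length (gl n X)" "D = gl n X ! i" using assms(1) by (metis in_set_conv_nth)
  obtain j where j: "j < length (gl n X)" "D' = gl n X ! j" using assms(2) by (metis in_set_conv_nth)
  have "i \<noteq> j" using assms(3) i j by blast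
  then show ?thesis using gl_nth_disj i j by simp
qed

lemma gl_inside:
  assumes "T \<noteq> {}" "T \<subseteq> {1..n}" "T \<inter> X = {}"
    and nb: "\<And>a b x. a \<in> T \<Longrightarrow> b \<in> T \<Longrightarrow> x \<in> X \<Longrightarrow> a < x \<Longrightarrow> x < b \<Longrightarrow> False"
  shows "\<exists>D\<in>set (gl n X). T \<subseteq> D"
proof -
  obtain a0 where a0: "a0 \<in> T" using assms(1) by blast
  obtain D0 where D0: "D0 \<in> set (gl n X)" "a0 \<in> D0" using gl_cover a0 assms(2,3) by blast
  have "T \<subseteq> D0"
  proof
    fix b assume b: "b \<in> T"
    obtain D where D: "D \<in> set (gl n X)" "b \<in> D" using gl_cover b assms(2,3) by blast
    have "D = D0"
    proof (rule ccontr)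
      assume "D \<noteq> D0"
      obtain i where i: "i < length (gl n X)" "D0 = gl n X ! i" using D0(1) by (metis in_set_conv_nth)
      obtain j where j: "j < length (gl n X)" "D = gl n X ! j" using D(1) by (metis in_set_conv_nth)
      have "i \<noteq> j" using \<open>D \<noteq> D0\<close> i j by blast
      then show False
      proof (cases "i < j")
        case True
        then obtain x where "x \<in> X" "a0 < x" "x < b" using gl_sep[OF True j(1)] D0(2) D(2) i j by blast
        then show False using nb a0 b by blast
      next
        case False
        then have "j < i" using \<open>i \<noteq> j\<close> by simp
        then obtain x where "x \<in> X" "b < x" "x < a0" using gl_sep[OF _ i(1)] D0(2) D(2) i j by blast
        then show False using nb a0 b by blast
      qed
    qed
    then show "b \<in> D0" using D(2) by simp
  qed
  then show ?thesis using D0(1) by blast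
qed

lemma gl_partition:
  assumes "X \<noteq> {}"
  shows "partition_on {1..n} (insert X (set (gl n X)))"
proof (rule partition_onI)
  show "\<Union>(insert X (set (gl n X))) = {1..n}"
  proof
    show "\<Union>(insert X (set (gl n X))) \<subseteq> {1..n}" using X gl_props(2) by blast
    show "{1..n} \<subseteq> \<Union>(insert X (set (gl n X)))"
    proof
      fix y assume y: "y \<in> {1..n}"
      show "y \<in> \<Union>(insert X (set (gl n X)))"
      proof (cases "y \<in> X")
        case False
        then show ?thesis using gl_cover[OF y] by blast
      qed simp
    qed
  qed
  show "{} \<notin> insert X (set (gl n X))" using assms gl_props(1) by blast
  fix p q assume pq: "p \<in> insert X (set (gl n X))" "q \<in> insert X (set (gl n X))" "p \<noteq> q"
  show "disjnt p q"
  proof (cases "p = X")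
    case True
    then have "q \<in> set (gl n X)" using pq by simp
    then show ?thesis using gl_props(3) True unfolding disjnt_def by blast
  next
    case False
    then have p: "p \<in> set (gl n X)" using pq by simp
    show ?thesis
    proof (cases "q = X")
      case True
      then show ?thesis using gl_props(3)[OF p] unfolding disjnt_def by blast
    next
      case False
      then have "q \<in> set (gl n X)" using pq by simp
      then show ?thesis using gl_disj p pq(3) unfolding disjnt_def by blast
    qed
  qed
qed

lemma gl_nc: "noncrossing (insert X (set (gl n X)))"
  unfolding noncrossing_iff
proof (intro ballI impI)
  fix p q assume pq: "p \<in> insert X (set (gl n X))" "q \<in> insert X (set (gl n X))" "p \<noteq> q"
  show "\<not> cross p q"
  proof (cases "p = X")
    case True
    then have q: "q \<in> set (gl n X)" using pq by simp
    show ?thesis using cvx_nocross(2)[of q q p] gl_props(3,4)[OF q] True by blast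
  next
    case False
    then have p: "p \<in> set (gl n X)" using pq by simp
    show ?thesis
    proof (cases "q = X")
      case True
      then show ?thesis using cvx_nocross(1)[of p p q] gl_props(3,4)[OF p] by blast
    next
      case False
      then have "q \<in> set (gl n X)" using pq by simp
      then have "q \<inter> p = {}" using gl_disj p pq(3) by blast
      then show ?thesis using cvx_nocross(1)[of p p q] gl_props(4)[OF p] by blast
    qed
  qed
qed

lemma X_notin_gl: "X \<noteq> {} \<Longrightarrow> X \<notin> set (gl n X)"
  using gl_props(3) by blast

lemma gl_card: "sum_list (map card (gl n X)) \<le> n - card X"
proof -
  have "sum_list (map card (gl n X)) = sum card (set (gl n X))"
    by (rule sum_list_distinct_conv_sum_set[OF gl_distinct])
  also have "\<dots> = card (\<Union>(set (gl n X)))"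
  proof (rule card_Union_disjoint[symmetric])
    show "pairwise disjnt (set (gl n X))" unfolding pairwise_def disjnt_def using gl_disj by blast
    show "finite A" if "A \<in> set (gl n X)" for A using gl_props(2)[OF that] finite_subset by blast
  qed
  also have "\<dots> \<le> card ({1..n} - X)"
    by (rule card_mono) (use gl_props(2,3) in auto)
  also have "\<dots> = n - card X" using X by (simp add: card_Diff_subset X_fin)
  finally show ?thesis .
qed

end

lemma part_inside_or_disj:
  assumes "partition_on A SS" "coarser SS P" "\<rho> \<in> P" "S \<in> SS"
  shows "\<rho> \<subseteq> S \<or> \<rho> \<inter> S = {}"
proof -
  obtain S' where "S' \<in> SS" "\<rho> \<subseteq> S'" using assms(2,3) unfolding coarser_def by blast
  show ?thesis
  proof (cases "S' = S")
    case False
    then have "S' \<inter> S = {}" using partition_onD2[OF assms(1)] \<open>S' \<in> SS\<close> assms(4) unfolding disjoint_def by blast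
    then show ?thesis using \<open>\<rho> \<subseteq> S'\<close> by blast
  qed (use \<open>\<rho> \<subseteq> S'\<close> in blast)
qed

lemma coarser_trans:
  assumes "coarser A B" "coarser B C"
  shows "coarser A C"
  unfolding coarser_def
proof
  fix X assume "X \<in> C"
  then obtain Y where "Y \<in> B" "X \<subseteq> Y" using assms(2) unfolding coarser_def by blast
  then obtain Z where "Z \<in> A" "Y \<subseteq> Z" using assms(1) unfolding coarser_def by blast
  then show "\<exists>Z\<in>A. X \<subseteq> Z" using \<open>X \<subseteq> Y\<close> by (meson order_trans)
qed

lemma tr_of_sub:
  assumes "partition_on A P" "L \<subseteq> P"
  shows "tr P (\<Union>L) = L"
proof -
  have io: "B \<subseteq> \<Union>L \<or> B \<inter> \<Union>L = {}" if B: "B \<in> P" for B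
  proof (cases "B \<in> L")
    case True
    then show ?thesis using Union_upper by auto
  next
    case False
    have "B \<inter> C = {}" if C: "C \<in> L" for C
    proof (rule ccontr)
      assume "B \<inter> C \<noteq> {}"
      then obtain x where "x \<in> B" "x \<in> C" by blast
      then have "B = C" using partition_same_block[OF assms(1) B, of C x] C assms(2) by auto
      then show False using False C by simp
    qed
    then show ?thesis by auto
  qed
  have "tr P (\<Union>L) = {B \<in> P. B \<subseteq> \<Union>L}"
    by (rule tr_sat) (use io partition_onD3[OF assms(1)] in auto)
  also have "\<dots> = L"
  proof
    show "{B \<in> P. B \<subseteq> \<Union>L} \<subseteq> L"
    proof
      fix B assume B: "B \<in> {B \<in> P. B \<subseteq> \<Union>L}"
      then have BP: "B \<in> P" and BL: "B \<subseteq> \<Union>L" by auto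
      obtain x where x: "x \<in> B" using partition_nonempty[OF assms(1) BP] by blast
      then have "x \<in> \<Union>L" using BL by auto
      then obtain C where C: "C \<in> L" "x \<in> C" by auto
      have "B = C" using partition_same_block[OF assms(1) BP, of C x] C x assms(2) by auto
      then show "B \<in> L" using C by simp
    qed
    show "L \<subseteq> {B \<in> P. B \<subseteq> \<Union>L}" using assms(2) by auto
  qed
  finally show ?thesis .
qed

lemma conv_between:
  assumes "finite s" "s \<noteq> {}" "y \<in> Conv s" "y \<notin> s"
  shows "\<exists>a\<in>s. \<exists>b\<in>s. a < y \<and> y < b"
proof -
  have "Min s \<le> y" "y \<le> Max s" using assms(3) unfolding Conv_def by auto
  moreover have "Min s \<in> s" "Max s \<in> s" using assms(1,2) by simp_all
  ultimately have "Min s < y" "y < Max s" using assms(4) by (metis le_less)+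
  then show ?thesis using \<open>Min s \<in> s\<close> \<open>Max s \<in> s\<close> by blast
qed

lemma between_conv:
  assumes "finite s" "a \<in> s" "b \<in> s" "a < y" "y < b"
  shows "y \<in> Conv s"
proof -
  have "Min s \<le> a" "b \<le> Max s" using assms by simp_all
  then have "Min s \<le> y" "y \<le> Max s" using assms(4,5) by linarith+
  then show ?thesis unfolding Conv_def by simp
qed

lemma lowerset_intro:
  assumes "L \<subseteq> P"
    and cl: "\<And>\<sigma> \<tau>. \<sigma> \<in> P \<Longrightarrow> \<tau> \<in> L \<Longrightarrow> Conv \<sigma> \<inter> \<tau> \<noteq> {} \<Longrightarrow> \<sigma> \<in> L"
  shows "L \<in> lowersets P"
proof -
  define R where "R = {(\<pi>, \<rho>). \<pi> \<in> P \<and> \<rho> \<in> P \<and> Conv \<pi> \<inter> \<rho> \<noteq> {}}"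
  have "\<sigma> \<in> L" if "(\<sigma>, \<tau>) \<in> R\<^sup>+" "\<tau> \<in> L" for \<sigma> \<tau>
    using that
  proof (induction arbitrary: rule: trancl_induct)
    case (base y)
    then show ?case using cl unfolding R_def by blast
  next
    case (step y z)
    then have "y \<in> L" using cl unfolding R_def by blast
    then show ?case using step.IH by blast
  qed
  then show ?thesis unfolding lowersets_def is_lowerset_def arrow_def R_def using assms(1) by blast
qed

lemma lowerset_closed:
  assumes "L \<in> lowersets P" "\<sigma> \<in> P" "\<tau> \<in> L" "Conv \<sigma> \<inter> \<tau> \<noteq> {}"
  shows "\<sigma> \<in> L"
proof -
  have "\<tau> \<in> P" using assms(1,3) unfolding lowersets_def is_lowerset_def by blast
  then have "(\<sigma>, \<tau>) \<in> arrow P" unfolding arrow_def using assms(2,4) by (intro r_into_trancl) simp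
  then show ?thesis using assms(1,2,3) unfolding lowersets_def is_lowerset_def by blast
qed

lemma lowerset_sub: "L \<in> lowersets P \<Longrightarrow> L \<subseteq> P"
  unfolding lowersets_def is_lowerset_def by blast

definition meet :: "nat set set \<Rightarrow> nat set set \<Rightarrow> nat set set" where
  "meet P1 P2 = {B \<inter> C | B C. B \<in> P1 \<and> C \<in> P2 \<and> B \<inter> C \<noteq> {}}"

lemma meet_partition:
  assumes "partition_on A P1" "partition_on A P2"
  shows "partition_on A (meet P1 P2)"
proof (rule partition_onI)
  show "\<Union>(meet P1 P2) = A"
  proof
    show "\<Union>(meet P1 P2) \<subseteq> A" unfolding meet_def using partition_sub[OF assms(1)] by blast
    show "A \<subseteq> \<Union>(meet P1 P2)"
    proof
      fix x assume "x \<in> A"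
      obtain B where "B \<in> P1" "x \<in> B" using partition_block_ex[OF assms(1) \<open>x \<in> A\<close>] by blast
      obtain C where "C \<in> P2" "x \<in> C" using partition_block_ex[OF assms(2) \<open>x \<in> A\<close>] by blast
      have "B \<inter> C \<in> meet P1 P2" unfolding meet_def using \<open>B \<in> P1\<close> \<open>C \<in> P2\<close> \<open>x \<in> B\<close> \<open>x \<in> C\<close> by blast
      then show "x \<in> \<Union>(meet P1 P2)" using \<open>x \<in> B\<close> \<open>x \<in> C\<close> by blast
    qed
  qed
  show "{} \<notin> meet P1 P2" unfolding meet_def by blast
  fix p q assume "p \<in> meet P1 P2" "q \<in> meet P1 P2" "p \<noteq> q"
  then obtain B C B' C' where p: "p = B \<inter> C" "B \<in> P1" "C \<in> P2" and q: "q = B' \<inter> C'" "B' \<in> P1" "C' \<in> P2"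
    unfolding meet_def by blast
  show "disjnt p q"
  proof (rule ccontr)
    assume "\<not> disjnt p q"
    then obtain x where "x \<in> p" "x \<in> q" unfolding disjnt_def by blast
    then have "B = B'" "C = C'" using partition_same_block[OF assms(1)] partition_same_block[OF assms(2)] p q by blast+
    then show False using p q \<open>p \<noteq> q\<close> by simp
  qed
qed

lemma meet_nc:
  assumes "noncrossing P1" "noncrossing P2"
  shows "noncrossing (meet P1 P2)"
  unfolding noncrossing_iff
proof (intro ballI impI notI)
  fix p q assume h: "p \<in> meet P1 P2" "q \<in> meet P1 P2" "p \<noteq> q" "cross p q"
  then obtain B C B' C' where p: "p = B \<inter> C" "B \<in> P1" "C \<in> P2" and q: "q = B' \<inter> C'" "B' \<in> P1" "C' \<in> P2"
    unfolding meet_def by blast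
  have "cross B B'" using cross_mono[OF h(4)] p q by blast
  then have "B = B'" using assms(1) p q unfolding noncrossing_iff by blast
  have "cross C C'" using cross_mono[OF h(4)] p q by blast
  then have "C = C'" using assms(2) p q unfolding noncrossing_iff by blast
  show False using \<open>B = B'\<close> \<open>C = C'\<close> p q h(3) by simp
qed

lemma meet_coarser:
  assumes "coarser P1 Q" "coarser P2 Q" "{} \<notin> Q"
  shows "coarser (meet P1 P2) Q"
  unfolding coarser_def
proof
  fix \<tau> assume "\<tau> \<in> Q"
  obtain B where "B \<in> P1" "\<tau> \<subseteq> B" using assms(1) \<open>\<tau> \<in> Q\<close> unfolding coarser_def by blast
  obtain C where "C \<in> P2" "\<tau> \<subseteq> C" using assms(2) \<open>\<tau> \<in> Q\<close> unfolding coarser_def by blast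
  have "\<tau> \<noteq> {}" using assms(3) \<open>\<tau> \<in> Q\<close> by blast
  then have "B \<inter> C \<in> meet P1 P2" unfolding meet_def using \<open>B \<in> P1\<close> \<open>C \<in> P2\<close> \<open>\<tau> \<subseteq> B\<close> \<open>\<tau> \<subseteq> C\<close> by blast
  then show "\<exists>C\<in>meet P1 P2. \<tau> \<subseteq> C" using \<open>\<tau> \<subseteq> B\<close> \<open>\<tau> \<subseteq> C\<close> by blast
qed

definition sep :: "nat set \<Rightarrow> nat set \<Rightarrow> bool" where
  "sep S \<rho> \<longleftrightarrow> (\<exists>D. cvx D \<and> ((S \<subseteq> D \<and> \<rho> \<inter> D = {}) \<or> (\<rho> \<subseteq> D \<and> S \<inter> D = {})))"

lemma sep_nocross:
  assumes "sep S \<rho>" "\<alpha> \<subseteq> S"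
  shows "\<not> cross \<alpha> \<rho>" "\<not> cross \<rho> \<alpha>"
proof -
  obtain D where D: "cvx D" "(S \<subseteq> D \<and> \<rho> \<inter> D = {}) \<or> (\<rho> \<subseteq> D \<and> S \<inter> D = {})"
    using assms(1) unfolding sep_def by blast
  from D(2) have "\<not> cross \<alpha> \<rho> \<and> \<not> cross \<rho> \<alpha>"
  proof
    assume "S \<subseteq> D \<and> \<rho> \<inter> D = {}"
    then show ?thesis using cvx_nocross[of \<alpha> D \<rho>] D(1) assms(2) by blast
  next
    assume "\<rho> \<subseteq> D \<and> S \<inter> D = {}"
    then have "\<alpha> \<inter> D = {}" using assms(2) by blast
    then show ?thesis using cvx_nocross[of \<rho> D \<alpha>] D(1) \<open>\<rho> \<subseteq> D \<and> S \<inter> D = {}\<close> by blast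
  qed
  then show "\<not> cross \<alpha> \<rho>" "\<not> cross \<rho> \<alpha>" by blast+
qed

lemma ncspec_split:
  assumes sp: "ncspec A Q P" and Q: "partition_on A Q"
    and SS: "partition_on A SS" "coarser SS P"
    and sp_sep: "\<And>S \<rho>. S \<in> SS \<Longrightarrow> \<rho> \<in> P \<Longrightarrow> \<rho> \<inter> S = {} \<Longrightarrow> sep S \<rho>"
    and S: "S \<in> SS"
  shows "ncspec S (tr Q S) (tr P S)"
proof -
  have P: "partition_on A P" "noncrossing P" "coarser P Q"
    and mn: "\<And>R. partition_on A R \<Longrightarrow> noncrossing R \<Longrightarrow> coarser R Q \<Longrightarrow> coarser R P"
    using sp unfolding ncspec_def by blast+
  have SA: "S \<subseteq> A" using partition_sub[OF SS(1) S] .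
  have io: "\<rho> \<subseteq> S \<or> \<rho> \<inter> S = {}" if "\<rho> \<in> P" for \<rho> using part_inside_or_disj[OF SS that S] .
  have "partition_on S (tr P S)" by (rule tr_partition[OF P(1) SA])
  moreover have "noncrossing (tr P S)" by (rule tr_nc[OF P(2)])
  moreover have "coarser (tr P S) (tr Q S)" by (rule tr_coarser[OF P(3)])
  moreover have "coarser R (tr P S)"
    if R: "partition_on S R" "noncrossing R" "coarser R (tr Q S)" for R
  proof -
    define R2 where "R2 = R \<union> {\<rho> \<in> P. \<rho> \<inter> S = {}}"
    have RS: "\<alpha> \<subseteq> S" if "\<alpha> \<in> R" for \<alpha> using partition_sub[OF R(1) that] .
    have "partition_on A R2"
    proof (rule partition_onI)
      show "\<Union>R2 = A"
      proof
        show "\<Union>R2 \<subseteq> A" unfolding R2_def using RS SA partition_sub[OF P(1)] by blast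
        show "A \<subseteq> \<Union>R2"
        proof
          fix x assume "x \<in> A"
          show "x \<in> \<Union>R2"
          proof (cases "x \<in> S")
            case True
            then show ?thesis using partition_onD1[OF R(1)] unfolding R2_def by blast
          next
            case False
            obtain \<rho> where "\<rho> \<in> P" "x \<in> \<rho>" using partition_block_ex[OF P(1) \<open>x \<in> A\<close>] by blast
            then have "\<rho> \<inter> S = {}" using io False by blast
            then show ?thesis unfolding R2_def using \<open>\<rho> \<in> P\<close> \<open>x \<in> \<rho>\<close> by blast
          qed
        qed
      qed
      show "{} \<notin> R2" unfolding R2_def using partition_onD3[OF R(1)] partition_onD3[OF P(1)] by blast
      fix p q assume pq: "p \<in> R2" "q \<in> R2" "p \<noteq> q"
      show "disjnt p q"
      proof (cases "p \<in> R")
        case True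
        show ?thesis
        proof (cases "q \<in> R")
          case True
          then show ?thesis using \<open>p \<in> R\<close> pq(3) partition_onD2[OF R(1)] unfolding disjoint_def disjnt_def by blast
        next
          case False
          then have "q \<inter> S = {}" using pq(2) unfolding R2_def by blast
          then show ?thesis using RS[OF \<open>p \<in> R\<close>] unfolding disjnt_def by blast
        qed
      next
        case False
        then have p: "p \<in> P" "p \<inter> S = {}" using pq(1) unfolding R2_def by blast+
        show ?thesis
        proof (cases "q \<in> R")
          case True
          then show ?thesis using RS[OF True] p unfolding disjnt_def by blast
        next
          case False
          then have "q \<in> P" using pq(2) unfolding R2_def by blast
          then show ?thesis using p pq(3) partition_onD2[OF P(1)] unfolding disjoint_def disjnt_def by blast
        qed
      qed
    qed
    moreover have "noncrossing R2"
      unfolding noncrossing_iff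
    proof (intro ballI impI)
      fix p q assume pq: "p \<in> R2" "q \<in> R2" "p \<noteq> q"
      show "\<not> cross p q"
      proof (cases "p \<in> R")
        case True
        show ?thesis
        proof (cases "q \<in> R")
          case True
          then show ?thesis using \<open>p \<in> R\<close> pq(3) R(2) unfolding noncrossing_iff by blast
        next
          case False
          then have "q \<in> P" "q \<inter> S = {}" using pq(2) unfolding R2_def by blast+
          then have "sep S q" using sp_sep S by blast
          then show ?thesis using sep_nocross(1) RS[OF \<open>p \<in> R\<close>] by blast
        qed
      next
        case False
        then have p: "p \<in> P" "p \<inter> S = {}" using pq(1) unfolding R2_def by blast+
        show ?thesis
        proof (cases "q \<in> R")
          case True
          have "sep S p" using sp_sep S p by blast
          then show ?thesis using sep_nocross(2) RS[OF True] by blast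
        next
          case False
          then have "q \<in> P" using pq(2) unfolding R2_def by blast
          then show ?thesis using p pq(3) P(2) unfolding noncrossing_iff by blast
        qed
      qed
    qed
    moreover have "coarser R2 Q"
      unfolding coarser_def
    proof
      fix \<tau> assume "\<tau> \<in> Q"
      obtain \<rho> where "\<rho> \<in> P" "\<tau> \<subseteq> \<rho>" using P(3) \<open>\<tau> \<in> Q\<close> unfolding coarser_def by blast
      show "\<exists>C\<in>R2. \<tau> \<subseteq> C"
      proof (cases "\<rho> \<inter> S = {}")
        case True
        then show ?thesis unfolding R2_def using \<open>\<rho> \<in> P\<close> \<open>\<tau> \<subseteq> \<rho>\<close> by blast
      next
        case False
        then have "\<rho> \<subseteq> S" using io \<open>\<rho> \<in> P\<close> by blast
        have "\<tau> \<noteq> {}" using partition_onD3[OF Q] \<open>\<tau> \<in> Q\<close> by blast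
        then have "\<tau> \<inter> S \<in> tr Q S" using trI[OF \<open>\<tau> \<in> Q\<close>] \<open>\<tau> \<subseteq> \<rho>\<close> \<open>\<rho> \<subseteq> S\<close> by (metis inf.absorb1 order_trans)
        moreover have "\<tau> \<inter> S = \<tau>" using \<open>\<tau> \<subseteq> \<rho>\<close> \<open>\<rho> \<subseteq> S\<close> by blast
        ultimately obtain \<alpha> where "\<alpha> \<in> R" "\<tau> \<subseteq> \<alpha>" using R(3) unfolding coarser_def by metis
        then show ?thesis unfolding R2_def by blast
      qed
    qed
    ultimately have "coarser R2 P" using mn by blast
    show ?thesis
      unfolding coarser_def
    proof
      fix \<beta> assume "\<beta> \<in> tr P S"
      then obtain \<rho> where \<rho>: "\<rho> \<in> P" "\<rho> \<inter> S \<noteq> {}" "\<beta> = \<rho> \<inter> S" by (elim trE)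
      then have "\<rho> \<subseteq> S" using io by blast
      then have "\<beta> = \<rho>" using \<rho>(3) by blast
      obtain \<gamma> where "\<gamma> \<in> R2" "\<rho> \<subseteq> \<gamma>" using \<open>coarser R2 P\<close> \<rho>(1) unfolding coarser_def by blast
      show "\<exists>C\<in>R. \<beta> \<subseteq> C"
      proof (cases "\<gamma> \<in> R")
        case True
        then show ?thesis using \<open>\<rho> \<subseteq> \<gamma>\<close> \<open>\<beta> = \<rho>\<close> by blast
      next
        case False
        then have "\<gamma> \<inter> S = {}" using \<open>\<gamma> \<in> R2\<close> unfolding R2_def by blast
        then show ?thesis using \<open>\<rho> \<subseteq> \<gamma>\<close> \<rho>(2) by blast
      qed
    qed
  qed
  ultimately show ?thesis unfolding ncspec_def by blast
qed

lemma ncspec_glue: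
  assumes SS: "partition_on A SS" "coarser SS P" "coarser SS Q"
    and P: "partition_on A P" "noncrossing P" and Q: "partition_on A Q"
    and loc: "\<And>S. S \<in> SS \<Longrightarrow> ncspec S (tr Q S) (tr P S)"
  shows "ncspec A Q P"
proof -
  have "coarser P Q"
    unfolding coarser_def
  proof
    fix \<tau> assume "\<tau> \<in> Q"
    obtain S where S: "S \<in> SS" "\<tau> \<subseteq> S" using SS(3) \<open>\<tau> \<in> Q\<close> unfolding coarser_def by blast
    have "\<tau> \<noteq> {}" using partition_onD3[OF Q] \<open>\<tau> \<in> Q\<close> by blast
    then have "\<tau> \<inter> S \<in> tr Q S" using trI[OF \<open>\<tau> \<in> Q\<close>] S(2) by (metis inf.absorb1)
    then have "\<tau> \<in> tr Q S" using S(2) by (metis inf.absorb1)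
    moreover have "coarser (tr P S) (tr Q S)" using loc[OF S(1)] unfolding ncspec_def by blast
    ultimately obtain \<beta> where "\<beta> \<in> tr P S" "\<tau> \<subseteq> \<beta>" unfolding coarser_def by blast
    then obtain \<rho> where "\<rho> \<in> P" "\<beta> = \<rho> \<inter> S" by (elim trE)
    then show "\<exists>C\<in>P. \<tau> \<subseteq> C" using \<open>\<tau> \<subseteq> \<beta>\<close> by blast
  qed
  moreover have "coarser R P" if R: "partition_on A R" "noncrossing R" "coarser R Q" for R
    unfolding coarser_def
  proof
    fix \<rho> assume "\<rho> \<in> P"
    obtain S where S: "S \<in> SS" "\<rho> \<subseteq> S" using SS(2) \<open>\<rho> \<in> P\<close> unfolding coarser_def by blast
    have SA: "S \<subseteq> A" using partition_sub[OF SS(1) S(1)] .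
    have "\<rho> \<noteq> {}" using partition_onD3[OF P(1)] \<open>\<rho> \<in> P\<close> by blast
    then have "\<rho> \<inter> S \<in> tr P S" using trI[OF \<open>\<rho> \<in> P\<close>] S(2) by (metis inf.absorb1)
    then have \<rho>S: "\<rho> \<in> tr P S" using S(2) by (metis inf.absorb1)
    have "partition_on S (tr R S)" by (rule tr_partition[OF R(1) SA])
    moreover have "noncrossing (tr R S)" by (rule tr_nc[OF R(2)])
    moreover have "coarser (tr R S) (tr Q S)" by (rule tr_coarser[OF R(3)])
    ultimately have "coarser (tr R S) (tr P S)" using loc[OF S(1)] unfolding ncspec_def by blast
    then obtain \<gamma> where "\<gamma> \<in> tr R S" "\<rho> \<subseteq> \<gamma>" using \<rho>S unfolding coarser_def by blast
    then obtain C where "C \<in> R" "\<gamma> = C \<inter> S" by (elim trE)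
    then show "\<exists>C\<in>R. \<rho> \<subseteq> C" using \<open>\<rho> \<subseteq> \<gamma>\<close> by blast
  qed
  ultimately show ?thesis unfolding ncspec_def using P by blast
qed

lemma recon:
  assumes "partition_on A SS" "coarser SS Q" "partition_on A Q"
  shows "Q = (\<Union>S\<in>SS. tr Q S)"
proof
  show "Q \<subseteq> (\<Union>S\<in>SS. tr Q S)"
  proof
    fix \<tau> assume "\<tau> \<in> Q"
    obtain S where S: "S \<in> SS" "\<tau> \<subseteq> S" using assms(2) \<open>\<tau> \<in> Q\<close> unfolding coarser_def by blast
    have "\<tau> \<noteq> {}" using partition_onD3[OF assms(3)] \<open>\<tau> \<in> Q\<close> by blast
    then have "\<tau> \<inter> S \<in> tr Q S" using trI[OF \<open>\<tau> \<in> Q\<close>] S(2) by (metis inf.absorb1)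
    then have "\<tau> \<in> tr Q S" using S(2) by (metis inf.absorb1)
    then show "\<tau> \<in> (\<Union>S\<in>SS. tr Q S)" using S(1) by blast
  qed
  show "(\<Union>S\<in>SS. tr Q S) \<subseteq> Q"
  proof
    fix \<beta> assume "\<beta> \<in> (\<Union>S\<in>SS. tr Q S)"
    then obtain S where S: "S \<in> SS" "\<beta> \<in> tr Q S" by blast
    then obtain \<tau> where \<tau>: "\<tau> \<in> Q" "\<tau> \<inter> S \<noteq> {}" "\<beta> = \<tau> \<inter> S" by (elim trE)
    have "\<tau> \<subseteq> S \<or> \<tau> \<inter> S = {}" by (rule part_inside_or_disj[OF assms(1,2) \<tau>(1) S(1)])
    then have "\<beta> = \<tau>" using \<tau> by blast
    then show "\<beta> \<in> Q" using \<tau>(1) by simp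
  qed
qed

lemma glue_partition:
  assumes SS: "partition_on A SS" and G: "\<And>S. S \<in> SS \<Longrightarrow> partition_on S (G S)"
  shows "partition_on A (\<Union>S\<in>SS. G S)" "\<And>S. S \<in> SS \<Longrightarrow> tr (\<Union>S\<in>SS. G S) S = G S"
    "coarser SS (\<Union>S\<in>SS. G S)"
proof -
  have GS: "\<beta> \<subseteq> S" if "S \<in> SS" "\<beta> \<in> G S" for S \<beta> using partition_sub[OF G[OF that(1)] that(2)] .
  have Gne: "\<beta> \<noteq> {}" if "S \<in> SS" "\<beta> \<in> G S" for S \<beta> using partition_onD3[OF G[OF that(1)]] that(2) by blast
  have dS: "S \<inter> S' = {}" if "S \<in> SS" "S' \<in> SS" "S \<noteq> S'" for S S'
    using partition_onD2[OF SS] that unfolding disjoint_def by blast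
  show part: "partition_on A (\<Union>S\<in>SS. G S)"
  proof (rule partition_onI)
    show "\<Union>(\<Union>S\<in>SS. G S) = A"
    proof
      show "\<Union>(\<Union>S\<in>SS. G S) \<subseteq> A" using GS partition_sub[OF SS] by blast
      show "A \<subseteq> \<Union>(\<Union>S\<in>SS. G S)"
      proof
        fix x assume "x \<in> A"
        obtain S where "S \<in> SS" "x \<in> S" using partition_block_ex[OF SS \<open>x \<in> A\<close>] by blast
        then obtain \<beta> where "\<beta> \<in> G S" "x \<in> \<beta>" using partition_block_ex[OF G] by blast
        then show "x \<in> \<Union>(\<Union>S\<in>SS. G S)" using \<open>S \<in> SS\<close> by blast
      qed
    qed
    show "{} \<notin> (\<Union>S\<in>SS. G S)" using Gne by blast
    fix p q assume "p \<in> (\<Union>S\<in>SS. G S)" "q \<in> (\<Union>S\<in>SS. G S)" "p \<noteq> q"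
    then obtain S S' where S: "S \<in> SS" "p \<in> G S" and S': "S' \<in> SS" "q \<in> G S'" by blast
    show "disjnt p q"
    proof (cases "S = S'")
      case True
      then show ?thesis using partition_onD2[OF G[OF S(1)]] S S' \<open>p \<noteq> q\<close> unfolding disjoint_def disjnt_def by blast
    next
      case False
      then show ?thesis using dS[OF S(1) S'(1) False] GS S S' unfolding disjnt_def by blast
    qed
  qed
  show co: "coarser SS (\<Union>S\<in>SS. G S)" unfolding coarser_def using GS by blast
  fix S assume S: "S \<in> SS"
  have "tr (\<Union>S\<in>SS. G S) S = {\<beta> \<in> (\<Union>S\<in>SS. G S). \<beta> \<subseteq> S}"
    by (rule tr_sat) (use part_inside_or_disj[OF SS co _ S] Gne in blast)+
  also have "\<dots> = G S"
  proof
    show "{\<beta> \<in> (\<Union>S\<in>SS. G S). \<beta> \<subseteq> S} \<subseteq> G S"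
    proof
      fix \<beta> assume "\<beta> \<in> {\<beta> \<in> (\<Union>S\<in>SS. G S). \<beta> \<subseteq> S}"
      then obtain S' where "S' \<in> SS" "\<beta> \<in> G S'" "\<beta> \<subseteq> S" by blast
      moreover have "\<beta> \<noteq> {}" using Gne calculation by blast
      moreover have "\<beta> \<subseteq> S'" using GS calculation by blast
      ultimately have "S' = S" using dS S by blast
      then show "\<beta> \<in> G S" using \<open>\<beta> \<in> G S'\<close> by simp
    qed
    show "G S \<subseteq> {\<beta> \<in> (\<Union>S\<in>SS. G S). \<beta> \<subseteq> S}" using GS S by blast
  qed
  finally show "tr (\<Union>S\<in>SS. G S) S = G S" .
qed

context
  fixes n :: nat and P :: "nat set set" and p1 :: "nat set"
  assumes Ppart: "partition_on {1..n} P" and Pnc: "noncrossing P" and p1P: "p1 \<in> P" and one: "1 \<in> p1"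
begin

lemma p1_sub: "p1 \<subseteq> {1..n}"
  using partition_sub[OF Ppart p1P] .

lemma p1_ne: "p1 \<noteq> {}"
  using one by blast

lemma blk_sub: "\<rho> \<in> P \<Longrightarrow> \<rho> \<subseteq> {1..n}"
  using partition_sub[OF Ppart] .

lemma blk_disj: "\<rho> \<in> P \<Longrightarrow> \<rho> \<noteq> p1 \<Longrightarrow> \<rho> \<inter> p1 = {}"
proof (rule ccontr)
  assume h: "\<rho> \<in> P" "\<rho> \<noteq> p1" "\<rho> \<inter> p1 \<noteq> {}"
  then obtain x where "x \<in> \<rho>" "x \<in> p1" by blast
  then have "\<rho> = p1" using partition_same_block[OF Ppart h(1) p1P] by blast
  then show False using h(2) by simp
qed

lemma no_between:
  assumes "\<rho> \<in> P" "\<rho> \<noteq> p1" "a \<in> \<rho>" "b \<in> \<rho>" "y \<in> p1" "a < y" "y < b"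
  shows False
proof -
  have "1 \<notin> \<rho>" using blk_disj[OF assms(1,2)] one by blast
  moreover have "1 \<le> a" using blk_sub[OF assms(1)] assms(3) by auto
  ultimately have "1 < a" using assms(3) by (metis le_less)
  then have "cross p1 \<rho>" by (rule crossI[OF one assms(5) assms(3) assms(4) _ assms(6,7)])
  then show False using Pnc p1P assms(1,2) unfolding noncrossing_iff by blast
qed

lemma conv_disj:
  assumes "\<rho> \<in> P" "\<rho> \<noteq> p1" "\<sigma> \<subseteq> \<rho>" "\<sigma> \<noteq> {}"
  shows "Conv \<sigma> \<inter> p1 = {}"
proof (rule ccontr)
  assume "Conv \<sigma> \<inter> p1 \<noteq> {}"
  then obtain y where y: "y \<in> Conv \<sigma>" "y \<in> p1" by blast
  have fin: "finite \<sigma>" using blk_sub[OF assms(1)] assms(3) finite_subset by (metis finite_atLeastAtMost)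
  have "y \<notin> \<sigma>" using blk_disj[OF assms(1,2)] assms(3) y(2) by blast
  then obtain a b where "a \<in> \<sigma>" "b \<in> \<sigma>" "a < y" "y < b" using conv_between[OF fin assms(4) y(1)] by blast
  then show False using no_between[OF assms(1,2)] assms(3) y(2) by blast
qed

lemma blk_in_gap:
  assumes "\<rho> \<in> P" "\<rho> \<noteq> p1"
  shows "\<exists>D\<in>set (gl n p1). \<rho> \<subseteq> D"
proof (rule gl_inside[OF p1_sub])
  show "\<rho> \<noteq> {}" using partition_onD3[OF Ppart] assms(1) by blast
  show "\<rho> \<subseteq> {1..n}" using blk_sub[OF assms(1)] .
  show "\<rho> \<inter> p1 = {}" using blk_disj[OF assms] .
  show "\<And>a b x. a \<in> \<rho> \<Longrightarrow> b \<in> \<rho> \<Longrightarrow> x \<in> p1 \<Longrightarrow> a < x \<Longrightarrow> x < b \<Longrightarrow> False"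
    using no_between[OF assms] by blast
qed

lemma SS_part: "partition_on {1..n} (insert p1 (set (gl n p1)))"
  by (rule gl_partition[OF p1_sub p1_ne])

lemma SS_nc: "noncrossing (insert p1 (set (gl n p1)))"
  by (rule gl_nc[OF p1_sub])

lemma SS_coarser: "coarser (insert p1 (set (gl n p1))) P"
  unfolding coarser_def
proof
  fix \<rho> assume "\<rho> \<in> P"
  show "\<exists>C\<in>insert p1 (set (gl n p1)). \<rho> \<subseteq> C"
  proof (cases "\<rho> = p1")
    case True
    then show ?thesis by blast
  next
    case False
    then show ?thesis using blk_in_gap[OF \<open>\<rho> \<in> P\<close>] by blast
  qed
qed

lemma SS_sep: "S \<in> insert p1 (set (gl n p1)) \<Longrightarrow> \<rho> \<in> P \<Longrightarrow> \<rho> \<inter> S = {} \<Longrightarrow> sep S \<rho>"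
proof -
  assume S: "S \<in> insert p1 (set (gl n p1))" and \<rho>: "\<rho> \<in> P" "\<rho> \<inter> S = {}"
  show "sep S \<rho>"
  proof (cases "S = p1")
    case True
    then have "\<rho> \<noteq> p1" using \<rho> one by blast
    then obtain D where D: "D \<in> set (gl n p1)" "\<rho> \<subseteq> D" using blk_in_gap[OF \<rho>(1)] by blast
    have "cvx D" "D \<inter> p1 = {}" using gl_props[OF p1_sub D(1)] by blast+
    then show ?thesis unfolding sep_def using D(2) True by blast
  next
    case False
    then have "S \<in> set (gl n p1)" using S by blast
    then have "cvx S" using gl_props[OF p1_sub] by blast
    then show ?thesis unfolding sep_def using \<rho>(2) by blast
  qed
qed

lemma tr_P_p1: "tr P p1 = {p1}"
proof -
  have "tr P p1 = {B \<in> P. B \<subseteq> p1}"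
    by (rule tr_sat) (use blk_disj partition_onD3[OF Ppart] in blast)+
  also have "\<dots> = {p1}"
  proof
    show "{B \<in> P. B \<subseteq> p1} \<subseteq> {p1}"
    proof
      fix B assume "B \<in> {B \<in> P. B \<subseteq> p1}"
      then have B: "B \<in> P" "B \<subseteq> p1" by auto
      have "B \<noteq> {}" using partition_onD3[OF Ppart] B(1) by blast
      then have "B = p1" using blk_disj[OF B(1)] B(2) by blast
      then show "B \<in> {p1}" by simp
    qed
    show "{p1} \<subseteq> {B \<in> P. B \<subseteq> p1}" using p1P by simp
  qed
  finally show ?thesis .
qed

lemma low_p1: "{p1} \<in> lowersets P"
proof (rule lowerset_intro)
  show "{p1} \<subseteq> P" using p1P by simp
  fix \<sigma> \<tau> assume h: "\<sigma> \<in> P" "\<tau> \<in> {p1}" "Conv \<sigma> \<inter> \<tau> \<noteq> {}"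
  show "\<sigma> \<in> {p1}"
  proof (rule ccontr)
    assume "\<sigma> \<notin> {p1}"
    then have "\<sigma> \<noteq> p1" by simp
    moreover have "\<sigma> \<noteq> {}" using partition_onD3[OF Ppart] h(1) by blast
    ultimately have "Conv \<sigma> \<inter> p1 = {}" using conv_disj[OF h(1)] by blast
    then show False using h(2,3) by simp
  qed
qed

lemma uniqA:
  assumes L: "L \<in> lowersets P" and oneL: "1 \<in> \<Union>L"
    and eq: "img (rank (\<Union>L)) L = {{1..card (\<Union>L)}}"
  shows "L = {p1}"
proof -
  have LP: "L \<subseteq> P" using lowerset_sub[OF L] .
  have "\<Union>L \<subseteq> {1..n}" using LP blk_sub by blast
  then have fin: "finite (\<Union>L)" using finite_subset by blast
  have inj: "inj_on (rank (\<Union>L)) (\<Union>L)" using rank_inj[OF fin] .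
  obtain B0 where B0: "B0 \<in> L" "1 \<in> B0" using oneL by blast
  have "B0 = p1" using partition_same_block[OF Ppart _ p1P, of B0 1] B0 LP one by blast
  have all: "B = B0" if "B \<in> L" for B
  proof -
    have "rank (\<Union>L) ` B \<in> img (rank (\<Union>L)) L" "rank (\<Union>L) ` B0 \<in> img (rank (\<Union>L)) L"
      unfolding img_def using that B0 by blast+
    then have "rank (\<Union>L) ` B = rank (\<Union>L) ` B0" using eq by simp
    moreover have "B \<subseteq> \<Union>L" "B0 \<subseteq> \<Union>L" using that B0 by blast+
    ultimately show "B = B0" using inj_on_image_eq_iff[OF inj \<open>B \<subseteq> \<Union>L\<close> \<open>B0 \<subseteq> \<Union>L\<close>] by simp
  qed
  then show ?thesis using B0 \<open>B0 = p1\<close> by blast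
qed

end


context
  fixes n :: nat and Q P :: "nat set set" and p1 :: "nat set"
  assumes Qpart: "partition_on {1..n} Q" and sp: "ncspec {1..n} Q P" and p1P: "p1 \<in> P" and one: "1 \<in> p1"
begin

lemma Ppart': "partition_on {1..n} P" and Pnc': "noncrossing P" and PQ: "coarser P Q"
  using sp unfolding ncspec_def by blast+

lemma Q_in_blk:
  assumes "\<tau> \<in> Q"
  obtains \<rho> where "\<rho> \<in> P" "\<tau> \<subseteq> \<rho>"
  using PQ assms unfolding coarser_def by blast

lemma Q_io: "\<tau> \<in> Q \<Longrightarrow> \<tau> \<subseteq> p1 \<or> \<tau> \<inter> p1 = {}"
proof -
  assume "\<tau> \<in> Q"
  then obtain \<rho> where "\<rho> \<in> P" "\<tau> \<subseteq> \<rho>" by (rule Q_in_blk)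
  show ?thesis
  proof (cases "\<rho> = p1")
    case False
    then have "\<rho> \<inter> p1 = {}" using blk_disj[OF Ppart' Pnc' p1P one \<open>\<rho> \<in> P\<close>] by blast
    then show ?thesis using \<open>\<tau> \<subseteq> \<rho>\<close> by blast
  qed (use \<open>\<tau> \<subseteq> \<rho>\<close> in blast)
qed

lemma trQ_p1: "tr Q p1 = {B \<in> Q. B \<subseteq> p1}"
  by (rule tr_sat) (use Q_io partition_onD3[OF Qpart] in blast)+

lemma Union_trQ: "\<Union>(tr Q p1) = p1"
proof
  show "\<Union>(tr Q p1) \<subseteq> p1" unfolding trQ_p1 by blast
  show "p1 \<subseteq> \<Union>(tr Q p1)"
  proof
    fix x assume "x \<in> p1"
    then have "x \<in> {1..n}" using p1_sub[OF Ppart' Pnc' p1P one] by blast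
    then obtain \<tau> where "\<tau> \<in> Q" "x \<in> \<tau>" using partition_block_ex[OF Qpart] by blast
    then have "\<tau> \<subseteq> p1" using Q_io \<open>x \<in> p1\<close> by blast
    then show "x \<in> \<Union>(tr Q p1)" unfolding trQ_p1 using \<open>\<tau> \<in> Q\<close> \<open>x \<in> \<tau>\<close> by blast
  qed
qed

lemma low_LQ: "tr Q p1 \<in> lowersets Q"
proof (rule lowerset_intro)
  show "tr Q p1 \<subseteq> Q" unfolding trQ_p1 by blast
  fix \<sigma> \<tau> assume h: "\<sigma> \<in> Q" "\<tau> \<in> tr Q p1" "Conv \<sigma> \<inter> \<tau> \<noteq> {}"
  have \<tau>: "\<tau> \<subseteq> p1" using h(2) unfolding trQ_p1 by blast
  obtain \<rho> where \<rho>: "\<rho> \<in> P" "\<sigma> \<subseteq> \<rho>" using h(1) by (rule Q_in_blk)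
  have "\<sigma> \<noteq> {}" using partition_onD3[OF Qpart] h(1) by blast
  have "\<rho> = p1"
  proof (rule ccontr)
    assume "\<rho> \<noteq> p1"
    then have "Conv \<sigma> \<inter> p1 = {}" using conv_disj[OF Ppart' Pnc' p1P one \<rho>(1) _ \<rho>(2) \<open>\<sigma> \<noteq> {}\<close>] by blast
    then show False using h(3) \<tau> by blast
  qed
  then show "\<sigma> \<in> tr Q p1" unfolding trQ_p1 using h(1) \<rho>(2) by blast
qed

lemma split_all:
  assumes "S \<in> insert p1 (set (gl n p1))"
  shows "ncspec S (tr Q S) (tr P S)"
  by (rule ncspec_split[OF sp Qpart SS_part[OF Ppart' Pnc' p1P one] SS_coarser[OF Ppart' Pnc' p1P one]
        SS_sep[OF Ppart' Pnc' p1P one] assms])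

lemma ncspec_p1: "ncspec p1 (tr Q p1) {p1}"
  using split_all[of p1] tr_P_p1[OF Ppart' Pnc' p1P one] by simp

lemma uniqB:
  assumes L: "L \<in> lowersets Q" and oneL: "1 \<in> \<Union>L" and spL: "ncspec (\<Union>L) L {\<Union>L}"
  shows "\<Union>L = p1"
proof -
  define X where "X = \<Union>L"
  have LQ: "L \<subseteq> Q" using lowerset_sub[OF L] .
  have Xsub: "X \<subseteq> {1..n}" unfolding X_def using LQ partition_sub[OF Qpart] by blast
  have Xne: "X \<noteq> {}" using oneL X_def by blast
  have trQX: "tr Q X = L" unfolding X_def by (rule tr_of_sub[OF Qpart LQ])
  have X1: "X \<subseteq> p1"
  proof -
    have "partition_on X (tr P X)" by (rule tr_partition[OF Ppart' Xsub])
    moreover have "noncrossing (tr P X)" by (rule tr_nc[OF Pnc'])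
    moreover have "coarser (tr P X) L" using tr_coarser[OF PQ, of X] trQX by simp
    ultimately have "coarser (tr P X) {X}" using spL unfolding ncspec_def X_def by blast
    then obtain \<beta> where "\<beta> \<in> tr P X" "X \<subseteq> \<beta>" unfolding coarser_def by blast
    then obtain B where B: "B \<in> P" "\<beta> = B \<inter> X" by (elim trE)
    then have "X \<subseteq> B" using \<open>X \<subseteq> \<beta>\<close> by blast
    then have "1 \<in> B" using oneL X_def by blast
    then have "B = p1" using partition_same_block[OF Ppart' B(1) p1P, of 1] one by blast
    then show ?thesis using \<open>X \<subseteq> B\<close> by simp
  qed
  have p1X: "p1 \<subseteq> X"
  proof -
    define T where "T = insert X (set (gl n X))"
    have Tpart: "partition_on {1..n} T" unfolding T_def by (rule gl_partition[OF Xsub Xne])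
    have Tnc: "noncrossing T" unfolding T_def by (rule gl_nc[OF Xsub])
    have TQ: "coarser T Q"
      unfolding coarser_def
    proof
      fix \<tau> assume \<tau>Q: "\<tau> \<in> Q"
      show "\<exists>C\<in>T. \<tau> \<subseteq> C"
      proof (cases "\<tau> \<in> L")
        case True
        then show ?thesis unfolding T_def X_def by blast
      next
        case False
        have \<tau>ne: "\<tau> \<noteq> {}" using partition_onD3[OF Qpart] \<tau>Q by blast
        have \<tau>sub: "\<tau> \<subseteq> {1..n}" using partition_sub[OF Qpart \<tau>Q] .
        have \<tau>X: "\<tau> \<inter> X = {}"
        proof (rule ccontr)
          assume "\<tau> \<inter> X \<noteq> {}"
          then obtain x C where "x \<in> \<tau>" "C \<in> L" "x \<in> C" unfolding X_def by blast
          then have "\<tau> = C" using partition_same_block[OF Qpart \<tau>Q, of C x] LQ by blast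
          then show False using False \<open>C \<in> L\<close> by simp
        qed
        have nb: False if h: "a \<in> \<tau>" "b \<in> \<tau>" "x \<in> X" "a < x" "x < b" for a b x
        proof -
          have "finite \<tau>" using \<tau>sub finite_subset by blast
          then have "x \<in> Conv \<tau>" using between_conv h by blast
          obtain C where "C \<in> L" "x \<in> C" using h(3) unfolding X_def by blast
          then have "Conv \<tau> \<inter> C \<noteq> {}" using \<open>x \<in> Conv \<tau>\<close> by blast
          then have "\<tau> \<in> L" using lowerset_closed[OF L \<tau>Q \<open>C \<in> L\<close>] by blast
          then show False using False by simp
        qed
        obtain D where "D \<in> set (gl n X)" "\<tau> \<subseteq> D"
          using gl_inside[OF Xsub \<tau>ne \<tau>sub \<tau>X] nb by blast
        then show ?thesis unfolding T_def by blast
      qed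
    qed
    have "partition_on {1..n} (meet P T)" by (rule meet_partition[OF Ppart' Tpart])
    moreover have "noncrossing (meet P T)" by (rule meet_nc[OF Pnc' Tnc])
    moreover have "coarser (meet P T) Q" by (rule meet_coarser[OF PQ TQ partition_onD3[OF Qpart]])
    ultimately have "coarser (meet P T) P" using sp unfolding ncspec_def by blast
    then obtain M where "M \<in> meet P T" "p1 \<subseteq> M" using p1P unfolding coarser_def by blast
    then obtain B C where BC: "M = B \<inter> C" "B \<in> P" "C \<in> T" unfolding meet_def by blast
    then have "p1 \<subseteq> C" using \<open>p1 \<subseteq> M\<close> by blast
    then have "1 \<in> C" using one by blast
    have "C = X"
    proof (rule ccontr)
      assume "C \<noteq> X"
      then have "C \<in> set (gl n X)" using BC(3) unfolding T_def by blast
      then have "C \<inter> X = {}" using gl_props[OF Xsub] by blast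
      then show False using \<open>1 \<in> C\<close> oneL X_def by blast
    qed
    then show ?thesis using \<open>p1 \<subseteq> C\<close> by simp
  qed
  show ?thesis using X1 p1X X_def by blast
qed

end

lemma in_listset: "xs \<in> listset As \<longleftrightarrow> length xs = length As \<and> (\<forall>i<length As. xs ! i \<in> As ! i)"
proof (induction As arbitrary: xs)
  case Nil
  then show ?case by auto
next
  case (Cons A As)
  show ?case
  proof (cases xs)
    case Nil
    then show ?thesis by (simp add: set_Cons_def)
  next
    case (Cons y ys)
    have "xs \<in> listset (A # As) \<longleftrightarrow> y \<in> A \<and> ys \<in> listset As" using Cons by (auto simp: set_Cons_def)
    also have "\<dots> \<longleftrightarrow> y \<in> A \<and> length ys = length As \<and> (\<forall>i<length As. ys ! i \<in> As ! i)" using Cons.IH by simp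
    also have "\<dots> \<longleftrightarrow> length xs = length (A # As) \<and> (\<forall>i<length (A # As). xs ! i \<in> (A # As) ! i)"
      using Cons by (auto simp: All_less_Suc2)
    finally show ?thesis .
  qed
qed

lemma set_Cons_img: "set_Cons A XS = (\<lambda>(x, xs). x # xs) ` (A \<times> XS)"
  unfolding set_Cons_def by auto

lemma finite_listset: "(\<And>A. A \<in> set As \<Longrightarrow> finite A) \<Longrightarrow> finite (listset As)"
proof (induction As)
  case Nil
  then show ?case by simp
next
  case (Cons A As)
  then have "finite (A \<times> listset As)" by simp
  then show ?case by (simp add: set_Cons_img)
qed

lemma sum_set_Cons:
  assumes "finite A" "finite XS"
  shows "sum f (set_Cons A XS) = (\<Sum>x\<in>A. \<Sum>xs\<in>XS. f (x # xs))"
proof -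
  have inj: "inj_on (\<lambda>(x, xs). x # xs) (A \<times> XS)" by (auto simp: inj_on_def)
  have "sum f (set_Cons A XS) = sum (f \<circ> (\<lambda>(x, xs). x # xs)) (A \<times> XS)"
    unfolding set_Cons_img by (rule sum.reindex[OF inj])
  also have "\<dots> = (\<Sum>x\<in>A. \<Sum>xs\<in>XS. f (x # xs))"
    unfolding sum.cartesian_product by (rule sum.cong) auto
  finally show ?thesis .
qed

lemma sum_listset_append:
  assumes "\<And>A. A \<in> set As \<Longrightarrow> finite A" "\<And>B. B \<in> set Bs \<Longrightarrow> finite B"
  shows "sum f (listset (As @ Bs)) = (\<Sum>x\<in>listset As. \<Sum>y\<in>listset Bs. f (x @ y))"
  using assms(1)
proof (induction As arbitrary: f)
  case Nil
  then show ?case by simp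
next
  case (Cons A As)
  have fA: "finite A" using Cons.prems by simp
  have fin1: "finite (listset (As @ Bs))" by (rule finite_listset) (use Cons.prems assms(2) in auto)
  have fin2: "finite (listset As)" by (rule finite_listset) (use Cons.prems in auto)
  have "sum f (listset ((A # As) @ Bs)) = (\<Sum>a\<in>A. \<Sum>z\<in>listset (As @ Bs). f (a # z))"
    using sum_set_Cons[OF fA fin1] by simp
  also have "\<dots> = (\<Sum>a\<in>A. \<Sum>x\<in>listset As. \<Sum>y\<in>listset Bs. f (a # (x @ y)))"
    using Cons.IH[of "\<lambda>z. f (_ # z)"] Cons.prems by simp
  also have "\<dots> = (\<Sum>w\<in>set_Cons A (listset As). \<Sum>y\<in>listset Bs. f (w @ y))"
    using sum_set_Cons[OF fA fin2, of "\<lambda>w. \<Sum>y\<in>listset Bs. f (w @ y)"] by simp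
  finally show ?case by simp
qed

lemma cuts1_Cons:
  "cuts1 (NP # rest) = {L # Ls | L Ls. L \<in> lowersets (snd NP) \<and> Ls \<in> listset (map (\<lambda>NP. lowersets (snd NP)) rest) \<and> 1 \<in> \<Union>L}"
  unfolding cuts1_def by (auto simp: set_Cons_def)

lemma part_fin: "is_part NP \<Longrightarrow> finite (snd NP)"
  unfolding is_part_def using finite_elements by blast

lemma finite_lowersets: "finite P \<Longrightarrow> finite (lowersets P)"
proof -
  assume "finite P"
  have "lowersets P \<subseteq> Pow P" unfolding lowersets_def is_lowerset_def by blast
  then show ?thesis using \<open>finite P\<close> finite_subset by blast
qed

lemma finite_cuts1: "is_mpart M \<Longrightarrow> finite (cuts1 M)"
proof -
  assume "is_mpart M"
  have "finite (listset (map (\<lambda>NP. lowersets (snd NP)) M))"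
    by (rule finite_listset) (use \<open>is_mpart M\<close> part_fin finite_lowersets in \<open>auto simp: is_mpart_def\<close>)
  then show ?thesis unfolding cuts1_def by simp
qed

lemma Lpart_Cons: "Lpart (NP # rest) (L # Ls) = Lpart1 NP L @ Lpart rest Ls"
  unfolding Lpart_def by simp

lemma Ubar_Cons: "Ubar (NP # rest) (L # Ls) = Ubar1 NP L @ Ubar rest Ls"
  unfolding Ubar_def by simp

lemma Lpart_nil:
  "length Ls = length rest \<Longrightarrow> Lpart rest Ls = [] \<longleftrightarrow> (\<forall>L\<in>set Ls. L = {})"
proof (induction rest arbitrary: Ls)
  case Nil
  then show ?case by (simp add: Lpart_def)
next
  case (Cons NP rest)
  then obtain L Ls' where "Ls = L # Ls'" "length Ls' = length rest" by (cases Ls) auto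
  then show ?case using Cons.IH by (simp add: Lpart_def Lpart1_def)
qed

lemma gl_empty: "n \<ge> 1 \<Longrightarrow> gl n {} = [{1..n}]"
proof -
  assume "n \<ge> 1"
  have "{0<..<n + 1} = {1..n}" by auto
  then show ?thesis unfolding gl_def using \<open>n \<ge> 1\<close> by simp
qed

lemma img_id_on: "(\<And>x. x \<in> \<Union>P \<Longrightarrow> f x = x) \<Longrightarrow> img f P = P"
proof -
  assume h: "\<And>x. x \<in> \<Union>P \<Longrightarrow> f x = x"
  have "f ` B = B" if "B \<in> P" for B using h that by force
  then show ?thesis unfolding img_def by simp
qed

lemma restr_full: "is_part NP \<Longrightarrow> restr (snd NP) {1..fst NP} = NP"
proof -
  assume "is_part NP"
  then have p: "partition_on {1..fst NP} (snd NP)" unfolding is_part_def by blast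
  have "tr (snd NP) {1..fst NP} = snd NP" by (rule tr_full[OF p])
  moreover have "img (rank {1..fst NP}) (snd NP) = snd NP"
    by (rule img_id_on) (use rank_id partition_onD1[OF p] in blast)
  ultimately show ?thesis unfolding restr_eq by (cases NP) simp
qed

lemma Ubar1_empty: "is_part NP \<Longrightarrow> Ubar1 NP {} = [NP]"
proof -
  assume h: "is_part NP"
  then have "fst NP \<ge> 1" unfolding is_part_def by blast
  then show ?thesis unfolding Ubar1_gl using gl_empty restr_full[OF h] by simp
qed

lemma Ubar_empty: "is_mpart rest \<Longrightarrow> Ubar rest (replicate (length rest) {}) = rest"
proof (induction rest)
  case Nil
  then show ?case by (simp add: Ubar_def)
next
  case (Cons NP rest)
  then have "is_part NP" "is_mpart rest" unfolding is_mpart_def by auto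
  then show ?case using Cons.IH Ubar1_empty unfolding Ubar_def by simp
qed

lemma empty_lowerset: "{} \<in> lowersets P"
  by (rule lowerset_intro) auto

lemma replicate_in_listset: "replicate (length rest) {} \<in> listset (map (\<lambda>NP. lowersets (snd NP)) rest)"
  unfolding in_listset by (simp add: empty_lowerset)

lemma kappa_single: "kappa c [(m, R)] = (if R = {{1..m}} then kcoef c m else 0)"
  unfolding kappa_def by simp

lemma kappa_long: "kappa c (x # y # zs) = 0"
  unfolding kappa_def by (cases x) simp

lemma gamma_single: "gamma c [(m, R)] = (if nc m R = {{1..m}} then cP c R else 0)"
  unfolding gamma_def by simp

lemma gamma_long: "gamma c (x # y # zs) = 0"
  unfolding gamma_def by (cases x) simp

lemma sum_collapse:
  assumes "finite S" "a \<in> S" "\<And>x. x \<in> S \<Longrightarrow> x \<noteq> a \<Longrightarrow> f x = 0"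
  shows "sum f S = f a"
proof -
  have "sum f S = f a + sum f (S - {a})" using sum.remove[OF assms(1,2)] .
  moreover have "sum f (S - {a}) = 0" using assms(3) by (intro sum.neutral) blast
  ultimately show ?thesis by simp
qed

lemma img_rank_self: "finite X \<Longrightarrow> img (rank X) {X} = {{1..card X}}"
  unfolding img_def using rank_range by simp

lemma cut_cases:
  assumes "x \<in> cuts1 (NP # rest)"
  obtains L Ls where "x = L # Ls" "L \<in> lowersets (snd NP)" "1 \<in> \<Union>L" "length Ls = length rest"
    "Ls \<in> listset (map (\<lambda>NP. lowersets (snd NP)) rest)"
proof -
  obtain L Ls where "x = L # Ls" "L \<in> lowersets (snd NP)" "Ls \<in> listset (map (\<lambda>NP. lowersets (snd NP)) rest)" "1 \<in> \<Union>L"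
    using assms unfolding cuts1_Cons by blast
  moreover then have "length Ls = length rest" unfolding in_listset by simp
  ultimately show ?thesis using that by blast
qed

lemma Lpart_nonsingle:
  assumes "length Ls = length rest" "\<not> (\<forall>L'\<in>set Ls. L' = {})" "L \<noteq> {}"
  obtains y z zs where "Lpart (NP # rest) (L # Ls) = y # z # zs"
proof -
  have "Lpart rest Ls \<noteq> []" using Lpart_nil[OF assms(1)] assms(2) by blast
  then obtain z zs where "Lpart rest Ls = z # zs" by (cases "Lpart rest Ls") auto
  then show ?thesis using that assms(3) by (simp add: Lpart_Cons Lpart1_def)
qed

lemma all_empty_replicate: "length Ls = length rest \<Longrightarrow> (\<forall>L'\<in>set Ls. L' = {}) \<Longrightarrow> Ls = replicate (length rest) {}"
  by (metis replicate_eqI)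

lemma hsA:
  assumes M: "is_nc_mpart ((n, P) # rest)" and p1P: "p1 \<in> P" and one: "1 \<in> p1"
  shows "hs (kappa c) g ((n, P) # rest) = kcoef c (card p1) * g (map (restr P) (gl n p1) @ rest)"
proof -
  have Ppart: "partition_on {1..n} P" and Pnc: "noncrossing P" and n1: "n \<ge> 1"
    using M unfolding is_nc_mpart_def is_mpart_def is_part_def by auto
  have mrest: "is_mpart rest" using M unfolding is_nc_mpart_def is_mpart_def by simp
  have mM: "is_mpart ((n, P) # rest)" using M unfolding is_nc_mpart_def by simp
  define a where "a = {p1} # replicate (length rest) {}"
  define f where "f Ls = kappa c (Lpart ((n, P) # rest) Ls) * g (Ubar ((n, P) # rest) Ls)" for Ls
  have aC: "a \<in> cuts1 ((n, P) # rest)"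
    unfolding cuts1_Cons a_def using low_p1[OF Ppart Pnc p1P one] replicate_in_listset one by auto
  have zero: "f x = 0" if x: "x \<in> cuts1 ((n, P) # rest)" "x \<noteq> a" for x
  proof -
    obtain L Ls where LL0: "x = L # Ls" "L \<in> lowersets (snd (n, P))" "1 \<in> \<Union>L" "length Ls = length rest"
      using cut_cases[OF x(1)] by blast
    then have LL: "x = L # Ls" "L \<in> lowersets P" "1 \<in> \<Union>L" "length Ls = length rest" by simp_all
    have Lne: "L \<noteq> {}" using LL(3) by blast
    show ?thesis
    proof (cases "\<forall>L'\<in>set Ls. L' = {}")
      case False
      then obtain y z zs where "Lpart ((n, P) # rest) (L # Ls) = y # z # zs"
        using Lpart_nonsingle[OF LL(4) _ Lne] by blast
      then show ?thesis unfolding f_def LL(1) by (simp add: kappa_long)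
    next
      case True
      then have Ls: "Ls = replicate (length rest) {}" using all_empty_replicate LL(4) by blast
      then have "L \<noteq> {p1}" using x(2) LL(1) a_def by blast
      have LP: "L \<subseteq> P" using lowerset_sub[OF LL(2)] .
      have "Lpart ((n, P) # rest) x = [restr P (\<Union>L)]"
        unfolding LL(1) Lpart_Cons using Lne Lpart_nil[OF LL(4)] True by (simp add: Lpart1_def)
      also have "\<dots> = [(card (\<Union>L), img (rank (\<Union>L)) L)]" unfolding restr_eq using tr_of_sub[OF Ppart LP] by simp
      finally have lp: "Lpart ((n, P) # rest) x = [(card (\<Union>L), img (rank (\<Union>L)) L)]" .
      have "img (rank (\<Union>L)) L \<noteq> {{1..card (\<Union>L)}}"
        using uniqA[OF Ppart Pnc p1P one LL(2,3)] \<open>L \<noteq> {p1}\<close> by blast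
      then show ?thesis unfolding f_def lp by (simp add: kappa_single)
    qed
  qed
  have fa: "f a = kcoef c (card p1) * g (map (restr P) (gl n p1) @ rest)"
  proof -
    have fin: "finite p1" using p1_sub[OF Ppart Pnc p1P one] finite_subset by blast
    have "Lpart ((n, P) # rest) a = [restr P p1]"
      unfolding a_def Lpart_Cons using Lpart_nil[of "replicate (length rest) {}" rest] by (simp add: Lpart1_def)
    also have "\<dots> = [(card p1, {{1..card p1}})]"
      unfolding restr_eq tr_P_p1[OF Ppart Pnc p1P one] img_rank_self[OF fin] by simp
    finally have lp: "Lpart ((n, P) # rest) a = [(card p1, {{1..card p1}})]" .
    have ub: "Ubar ((n, P) # rest) a = map (restr P) (gl n p1) @ rest"
      unfolding a_def Ubar_Cons Ubar_empty[OF mrest] Ubar1_gl by simp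
    show ?thesis unfolding f_def lp ub by (simp add: kappa_single)
  qed
  have "hs (kappa c) g ((n, P) # rest) = sum f (cuts1 ((n, P) # rest))"
    unfolding hs_def f_def by simp
  also have "\<dots> = f a" by (rule sum_collapse[OF finite_cuts1[OF mM] aC zero])
  finally show ?thesis using fa by simp
qed

lemma hsB:
  assumes M: "is_mpart ((n, Q) # rest)" and sp: "ncspec {1..n} Q P" and p1P: "p1 \<in> P" and one: "1 \<in> p1"
  shows "hs (gamma c) g ((n, Q) # rest) = cP c (img (rank p1) (tr Q p1)) * g (map (restr Q) (gl n p1) @ rest)"
proof -
  have Qpart: "partition_on {1..n} Q" and n1: "n \<ge> 1"
    using M unfolding is_mpart_def is_part_def by auto
  have Ppart: "partition_on {1..n} P" and Pnc: "noncrossing P" using sp unfolding ncspec_def by blast+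
  have mrest: "is_mpart rest" using M unfolding is_mpart_def by simp
  have fin: "finite p1" using p1_sub[OF Ppart Pnc p1P one] finite_subset by blast
  define a where "a = tr Q p1 # replicate (length rest) {}"
  define f where "f Ls = gamma c (Lpart ((n, Q) # rest) Ls) * g (Ubar ((n, Q) # rest) Ls)" for Ls
  have U: "\<Union>(tr Q p1) = p1" by (rule Union_trQ[OF Qpart sp p1P one])
  have aC: "a \<in> cuts1 ((n, Q) # rest)"
    unfolding cuts1_Cons a_def using low_LQ[OF Qpart sp p1P one] replicate_in_listset one U by auto
  have zero: "f x = 0" if x: "x \<in> cuts1 ((n, Q) # rest)" "x \<noteq> a" for x
  proof -
    obtain L Ls where LL0: "x = L # Ls" "L \<in> lowersets (snd (n, Q))" "1 \<in> \<Union>L" "length Ls = length rest"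
      using cut_cases[OF x(1)] by blast
    then have LL: "x = L # Ls" "L \<in> lowersets Q" "1 \<in> \<Union>L" "length Ls = length rest" by simp_all
    have Lne: "L \<noteq> {}" using LL(3) by blast
    show ?thesis
    proof (cases "\<forall>L'\<in>set Ls. L' = {}")
      case False
      then obtain y z zs where "Lpart ((n, Q) # rest) (L # Ls) = y # z # zs"
        using Lpart_nonsingle[OF LL(4) _ Lne] by blast
      then show ?thesis unfolding f_def LL(1) by (simp add: gamma_long)
    next
      case True
      then have Ls: "Ls = replicate (length rest) {}" using all_empty_replicate LL(4) by blast
      then have "L \<noteq> tr Q p1" using x(2) LL(1) a_def by blast
      have LQ: "L \<subseteq> Q" using lowerset_sub[OF LL(2)] .
      define X where "X = \<Union>L"
      have trX: "tr Q X = L" unfolding X_def by (rule tr_of_sub[OF Qpart LQ])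
      have Xsub: "X \<subseteq> {1..n}" unfolding X_def using LQ partition_sub[OF Qpart] by blast
      have finX: "finite X" using Xsub finite_subset by blast
      have "Lpart ((n, Q) # rest) x = [restr Q X]"
        unfolding LL(1) Lpart_Cons X_def using Lne Lpart_nil[OF LL(4)] True by (simp add: Lpart1_def)
      also have "\<dots> = [(card X, img (rank X) L)]" unfolding restr_eq using trX by simp
      finally have lp: "Lpart ((n, Q) # rest) x = [(card X, img (rank X) L)]" .
      have "nc (card X) (img (rank X) L) \<noteq> {{1..card X}}"
      proof
        assume h: "nc (card X) (img (rank X) L) = {{1..card X}}"
        have pL: "partition_on X L" using tr_partition[OF Qpart Xsub] trX by simp
        have "nc (card X) (img (rank X) L) = img (rank X) {X}" using h img_rank_self[OF finX] by simp
        then have "ncspec X L {X}" using nc_restr_iff[OF finX pL] by simp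
        then have "X = p1" using uniqB[OF Qpart sp p1P one LL(2) LL(3)] X_def by simp
        then have "L = tr Q p1" using trX by simp
        then show False using \<open>L \<noteq> tr Q p1\<close> by simp
      qed
      then show ?thesis unfolding f_def lp by (simp add: gamma_single)
    qed
  qed
  have fa: "f a = cP c (img (rank p1) (tr Q p1)) * g (map (restr Q) (gl n p1) @ rest)"
  proof -
    have "Lpart ((n, Q) # rest) a = [restr Q p1]"
      unfolding a_def Lpart_Cons using Lpart_nil[of "replicate (length rest) {}" rest] U one
      by (auto simp: Lpart1_def)
    also have "\<dots> = [(card p1, img (rank p1) (tr Q p1))]" unfolding restr_eq by simp
    finally have lp: "Lpart ((n, Q) # rest) a = [(card p1, img (rank p1) (tr Q p1))]" .
    have pL: "partition_on p1 (tr Q p1)" by (rule tr_partition[OF Qpart p1_sub[OF Ppart Pnc p1P one]])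
    have "nc (card p1) (img (rank p1) (tr Q p1)) = img (rank p1) {p1}"
      using nc_restr_iff[OF fin pL] ncspec_p1[OF Qpart sp p1P one] by simp
    then have ncv: "nc (card p1) (img (rank p1) (tr Q p1)) = {{1..card p1}}" using img_rank_self[OF fin] by simp
    have ub: "Ubar ((n, Q) # rest) a = map (restr Q) (gl n p1) @ rest"
      unfolding a_def Ubar_Cons Ubar_empty[OF mrest] Ubar1_gl using U by simp
    show ?thesis unfolding f_def lp ub using ncv by (simp add: gamma_single)
  qed
  have "hs (gamma c) g ((n, Q) # rest) = sum f (cuts1 ((n, Q) # rest))"
    unfolding hs_def f_def by simp
  also have "\<dots> = f a" by (rule sum_collapse[OF finite_cuts1[OF M] aC zero])
  finally show ?thesis using fa by simp
qed

lemma unrank_part: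
  assumes "finite S" "partition_on {1..card S} R"
  shows "partition_on S (img (unrank S) R)" "img (rank S) (img (unrank S) R) = R"
proof -
  have inj: "inj_on (unrank S) {1..card S}" using unrank_bij[OF assms(1)] bij_betw_def by blast
  show "partition_on S (img (unrank S) R)"
    using partition_img[OF inj assms(2)] unrank_range[OF assms(1)] by simp
  show "img (rank S) (img (unrank S) R) = R"
    by (rule img_img[where S="{1..card S}"]) (use rank_unrank[OF assms(1)] partition_onD1[OF assms(2)] in auto)
qed

lemma rank_back:
  assumes "finite S" "\<Union>G \<subseteq> S"
  shows "img (unrank S) (img (rank S) G) = G"
  by (rule img_img[where S=S]) (use unrank_rank[OF assms(1)] assms(2) in auto)

lemma restr_mem:
  assumes Qpart: "partition_on {1..n} Q" and D: "D \<subseteq> {1..n}" and spD: "ncspec D (tr Q D) (tr P D)"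
  shows "restr Q D \<in> (\<lambda>(n, P). (\<lambda>Q. (n, Q)) ` {Q. partition_on {1..n} Q \<and> nc n Q = P}) (restr P D)"
proof -
  have fin: "finite D" using D finite_subset by blast
  have pD: "partition_on D (tr Q D)" by (rule tr_partition[OF Qpart D])
  have UP: "\<Union>(tr P D) \<subseteq> D" using spD unfolding ncspec_def using partition_onD1 by blast
  have inj: "inj_on (rank D) D" using rank_inj[OF fin] .
  have "partition_on {1..card D} (img (rank D) (tr Q D))"
    using partition_img[OF inj pD] rank_range[OF fin] by simp
  moreover have "nc (card D) (img (rank D) (tr Q D)) = img (rank D) (tr P D)"
    using nc_restr_iff[OF fin pD UP] spD by simp
  ultimately show ?thesis unfolding restr_eq by auto
qed

lemma the_index:
  assumes "distinct xs" "i < length xs"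
  shows "(THE j. j < length xs \<and> xs ! j = xs ! i) = i"
  by (rule the_equality) (use assms nth_eq_iff_index_eq in auto)

context
  fixes n :: nat and P :: "nat set set" and p1 :: "nat set"
  assumes Ppart: "partition_on {1..n} P" and Pnc: "noncrossing P" and p1P: "p1 \<in> P" and one: "1 \<in> p1"
begin

lemma p1_fin: "finite p1"
  using p1_sub[OF Ppart Pnc p1P one] finite_subset by blast

lemma hmap:
  assumes Qpart: "partition_on {1..n} Q" and sp: "ncspec {1..n} Q P"
  shows "img (rank p1) (tr Q p1) \<in> {Q'. partition_on {1..card p1} Q' \<and> nc (card p1) Q' = {{1..card p1}}}"
    "map (restr Q) (gl n p1) \<in> ncpre (map (restr P) (gl n p1))"
proof -
  have sub: "p1 \<subseteq> {1..n}" using p1_sub[OF Ppart Pnc p1P one] .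
  have pL: "partition_on p1 (tr Q p1)" by (rule tr_partition[OF Qpart sub])
  have "partition_on {1..card p1} (img (rank p1) (tr Q p1))"
    using partition_img[OF rank_inj[OF p1_fin] pL] rank_range[OF p1_fin] by simp
  moreover have "nc (card p1) (img (rank p1) (tr Q p1)) = img (rank p1) {p1}"
    using nc_restr_iff[OF p1_fin pL] ncspec_p1[OF Qpart sp p1P one] by simp
  ultimately show "img (rank p1) (tr Q p1) \<in> {Q'. partition_on {1..card p1} Q' \<and> nc (card p1) Q' = {{1..card p1}}}"
    using img_rank_self[OF p1_fin] by simp
  show "map (restr Q) (gl n p1) \<in> ncpre (map (restr P) (gl n p1))"
    unfolding ncpre_def in_listset
  proof (intro conjI allI impI)
    show "length (map (restr Q) (gl n p1)) = length (map (\<lambda>(n, P). (\<lambda>Q. (n, Q)) ` {Q. partition_on {1..n} Q \<and> nc n Q = P}) (map (restr P) (gl n p1)))"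
      by simp
    fix i assume i: "i < length (map (\<lambda>(n, P). (\<lambda>Q. (n, Q)) ` {Q. partition_on {1..n} Q \<and> nc n Q = P}) (map (restr P) (gl n p1)))"
    then have il: "i < length (gl n p1)" by simp
    let ?D = "gl n p1 ! i"
    have Din: "?D \<in> set (gl n p1)" using il by simp
    have Dsub: "?D \<subseteq> {1..n}" using gl_props(2)[OF sub Din] .
    have "ncspec ?D (tr Q ?D) (tr P ?D)" using split_all[OF Qpart sp p1P one] Din by blast
    then show "map (restr Q) (gl n p1) ! i \<in> map (\<lambda>(n, P). (\<lambda>Q. (n, Q)) ` {Q. partition_on {1..n} Q \<and> nc n Q = P}) (map (restr P) (gl n p1)) ! i"
      using restr_mem[OF Qpart Dsub] il by simp
  qed
qed

lemma SS_coarser_Q: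
  assumes sp: "ncspec {1..n} Q P"
  shows "coarser (insert p1 (set (gl n p1))) Q"
  using coarser_trans[OF SS_coarser[OF Ppart Pnc p1P one]] sp unfolding ncspec_def by blast

lemma hinj:
  assumes Q1: "partition_on {1..n} Q1" "ncspec {1..n} Q1 P"
    and Q2: "partition_on {1..n} Q2" "ncspec {1..n} Q2 P"
    and eq1: "img (rank p1) (tr Q1 p1) = img (rank p1) (tr Q2 p1)"
    and eq2: "map (restr Q1) (gl n p1) = map (restr Q2) (gl n p1)"
  shows "Q1 = Q2"
proof -
  have sub: "p1 \<subseteq> {1..n}" using p1_sub[OF Ppart Pnc p1P one] .
  have trs: "tr Q1 S = tr Q2 S" if S: "S \<in> insert p1 (set (gl n p1))" for S
  proof -
    have Ssub: "S \<subseteq> {1..n}" using S sub gl_props(2)[OF sub] by blast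
    have fin: "finite S" using Ssub finite_subset by blast
    have "img (rank S) (tr Q1 S) = img (rank S) (tr Q2 S)"
    proof (cases "S = p1")
      case True
      then show ?thesis using eq1 by simp
    next
      case False
      then have "S \<in> set (gl n p1)" using S by simp
      then have "restr Q1 S = restr Q2 S" using eq2 by (simp add: map_eq_conv)
      then show ?thesis unfolding restr_eq by simp
    qed
    moreover have "\<Union>(tr Q1 S) \<subseteq> S" "\<Union>(tr Q2 S) \<subseteq> S"
      using partition_onD1[OF tr_partition[OF Q1(1) Ssub]] partition_onD1[OF tr_partition[OF Q2(1) Ssub]] by auto
    ultimately show ?thesis using rank_back[OF fin] by metis
  qed
  have "Q1 = (\<Union>S\<in>insert p1 (set (gl n p1)). tr Q1 S)"
    by (rule recon[OF SS_part[OF Ppart Pnc p1P one] SS_coarser_Q[OF Q1(2)] Q1(1)])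
  also have "\<dots> = (\<Union>S\<in>insert p1 (set (gl n p1)). tr Q2 S)" using trs by simp
  also have "\<dots> = Q2"
    by (rule recon[OF SS_part[OF Ppart Pnc p1P one] SS_coarser_Q[OF Q2(2)] Q2(1), symmetric])
  finally show ?thesis .
qed

lemma hsurj:
  assumes a: "a \<in> {Q'. partition_on {1..card p1} Q' \<and> nc (card p1) Q' = {{1..card p1}}}"
    and b: "b \<in> ncpre (map (restr P) (gl n p1))"
  shows "\<exists>Q. partition_on {1..n} Q \<and> ncspec {1..n} Q P \<and> img (rank p1) (tr Q p1) = a \<and> map (restr Q) (gl n p1) = b"
proof -
  define Ds where "Ds = gl n p1"
  define SS where "SS = insert p1 (set Ds)"
  have sub: "p1 \<subseteq> {1..n}" using p1_sub[OF Ppart Pnc p1P one] .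
  have dist: "distinct Ds" unfolding Ds_def by (rule gl_distinct[OF sub])
  have p1nD: "p1 \<notin> set Ds" unfolding Ds_def using X_notin_gl[OF sub] one by blast
  have lb: "length b = length Ds" using b unfolding ncpre_def in_listset Ds_def by simp
  have bi0: "b ! i \<in> (\<lambda>(n, P). (\<lambda>Q. (n, Q)) ` {Q. partition_on {1..n} Q \<and> nc n Q = P}) (restr P (Ds ! i))"
    if "i < length Ds" for i
  proof -
    have "b ! i \<in> map (\<lambda>(n, P). (\<lambda>Q. (n, Q)) ` {Q. partition_on {1..n} Q \<and> nc n Q = P}) (map (restr P) Ds) ! i"
      using b that unfolding ncpre_def in_listset Ds_def by simp
    then show ?thesis using that by simp
  qed
  have bi': "fst (b ! i) = card (Ds ! i) \<and> partition_on {1..card (Ds ! i)} (snd (b ! i)) \<and>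
    nc (card (Ds ! i)) (snd (b ! i)) = img (rank (Ds ! i)) (tr P (Ds ! i))" if il: "i < length Ds" for i
  proof -
    obtain R where "b ! i = (card (Ds ! i), R)" "partition_on {1..card (Ds ! i)} R" "nc (card (Ds ! i)) R = img (rank (Ds ! i)) (tr P (Ds ! i))"
      using bi0[OF il] unfolding restr_eq by auto
    then show ?thesis by simp
  qed
  define idx where "idx S = (THE i. i < length Ds \<and> Ds ! i = S)" for S
  have idx: "idx (Ds ! i) = i" if "i < length Ds" for i unfolding idx_def by (rule the_index[OF dist that])
  define G where "G S = (if S = p1 then img (unrank p1) a else img (unrank S) (snd (b ! idx S)))" for S
  have Dfin: "finite D" if "D \<in> set Ds" for D
  proof -
    have "D \<subseteq> {1..n}" using gl_props(2)[OF sub] that unfolding Ds_def by blast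
    then show ?thesis using finite_subset by blast
  qed
  have Gi: "G (Ds ! i) = img (unrank (Ds ! i)) (snd (b ! i))" if il: "i < length Ds" for i
  proof -
    have "Ds ! i \<in> set Ds" using il by simp
    then have "Ds ! i \<noteq> p1" using p1nD by blast
    then have "G (Ds ! i) = img (unrank (Ds ! i)) (snd (b ! idx (Ds ! i)))" unfolding G_def by simp
    then show ?thesis using idx[OF il] by simp
  qed
  have aa: "partition_on {1..card p1} a" "nc (card p1) a = {{1..card p1}}" using a by auto
  have Gp1: "G p1 = img (unrank p1) a" unfolding G_def by simp
  have Gpart: "partition_on S (G S)" if S: "S \<in> SS" for S
  proof (cases "S = p1")
    case True
    then show ?thesis using unrank_part(1)[OF p1_fin aa(1)] Gp1 by simp
  next
    case False
    then have "S \<in> set Ds" using S unfolding SS_def by simp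
    then obtain i where i: "i < length Ds" "S = Ds ! i" by (auto simp: in_set_conv_nth)
    have "finite (Ds ! i)" using Dfin i by simp
    then show ?thesis using unrank_part(1)[OF _ bi'[OF i(1), THEN conjunct2, THEN conjunct1]] Gi[OF i(1)] i by simp
  qed
  have SSpart: "partition_on {1..n} SS" unfolding SS_def Ds_def by (rule SS_part[OF Ppart Pnc p1P one])
  have SSP: "coarser SS P" unfolding SS_def Ds_def by (rule SS_coarser[OF Ppart Pnc p1P one])
  define Q where "Q = (\<Union>S\<in>SS. G S)"
  have Qpart: "partition_on {1..n} Q" unfolding Q_def by (rule glue_partition(1)[OF SSpart Gpart])
  have trQ: "tr Q S = G S" if "S \<in> SS" for S unfolding Q_def by (rule glue_partition(2)[OF SSpart Gpart that])
  have SSQ: "coarser SS Q" unfolding Q_def by (rule glue_partition(3)[OF SSpart Gpart])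
  have loc: "ncspec S (tr Q S) (tr P S)" if S: "S \<in> SS" for S
  proof (cases "S = p1")
    case True
    have "img (rank p1) (G p1) = a" using unrank_part(2)[OF p1_fin aa(1)] Gp1 by simp
    then have "nc (card p1) (img (rank p1) (G p1)) = img (rank p1) {p1}"
      using aa(2) img_rank_self[OF p1_fin] by simp
    moreover have "partition_on p1 (G p1)" using Gpart S True by simp
    ultimately have "ncspec p1 (G p1) {p1}" using nc_restr_iff[OF p1_fin] by simp
    then show ?thesis using True trQ S tr_P_p1[OF Ppart Pnc p1P one] by simp
  next
    case False
    then have "S \<in> set Ds" using S unfolding SS_def by simp
    then obtain i where i: "i < length Ds" "S = Ds ! i" by (auto simp: in_set_conv_nth)
    have fin: "finite S" using Dfin i by simp
    have Ssub: "S \<subseteq> {1..n}" using gl_props(2)[OF sub] i unfolding Ds_def by simp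
    have "img (rank S) (G S) = snd (b ! i)" using unrank_part(2)[OF fin] bi'[OF i(1), THEN conjunct2, THEN conjunct1] Gi[OF i(1)] i by simp
    then have "nc (card S) (img (rank S) (G S)) = img (rank S) (tr P S)" using bi'[OF i(1), THEN conjunct2, THEN conjunct2] i by simp
    moreover have "partition_on S (G S)" using Gpart S by simp
    moreover have "\<Union>(tr P S) \<subseteq> S" using partition_onD1[OF tr_partition[OF Ppart Ssub]] by simp
    ultimately have "ncspec S (G S) (tr P S)" using nc_restr_iff[OF fin] by simp
    then show ?thesis using trQ S by simp
  qed
  have sp: "ncspec {1..n} Q P" by (rule ncspec_glue[OF SSpart SSP SSQ Ppart Pnc Qpart loc])
  have e1: "img (rank p1) (tr Q p1) = a"
    using trQ[of p1] unrank_part(2)[OF p1_fin aa(1)] Gp1 unfolding SS_def by simp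
  have e2: "map (restr Q) Ds = b"
  proof (rule nth_equalityI)
    show "length (map (restr Q) Ds) = length b" using lb by simp
    fix i assume "i < length (map (restr Q) Ds)"
    then have i: "i < length Ds" by simp
    have fin: "finite (Ds ! i)" using Dfin i by simp
    have "Ds ! i \<in> SS" unfolding SS_def using i by simp
    then have "restr Q (Ds ! i) = (card (Ds ! i), img (rank (Ds ! i)) (G (Ds ! i)))" unfolding restr_eq using trQ by simp
    also have "\<dots> = (card (Ds ! i), snd (b ! i))" using unrank_part(2)[OF fin bi'[OF i, THEN conjunct2, THEN conjunct1]] Gi[OF i] by simp
    also have "\<dots> = b ! i" using bi'[OF i, THEN conjunct1] by (metis prod.collapse)
    finally show "map (restr Q) Ds ! i = b ! i" using i by simp
  qed
  show ?thesis using Qpart sp e1 e2 unfolding Ds_def by blast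
qed

lemma bijC:
  "(\<Sum>Q\<in>{Q. partition_on {1..n} Q \<and> nc n Q = P}. cP c (img (rank p1) (tr Q p1)) * F (map (restr Q) (gl n p1)))
    = kcoef c (card p1) * (\<Sum>u\<in>ncpre (map (restr P) (gl n p1)). F u)"
proof -
  define SQ where "SQ = {Q. partition_on {1..n} Q \<and> nc n Q = P}"
  define A where "A = {Q'. partition_on {1..card p1} Q' \<and> nc (card p1) Q' = {{1..card p1}}}"
  define B where "B = ncpre (map (restr P) (gl n p1))"
  define h where "h Q = (img (rank p1) (tr Q p1), map (restr Q) (gl n p1))" for Q
  have SQ: "Q \<in> SQ \<longleftrightarrow> partition_on {1..n} Q \<and> ncspec {1..n} Q P" for Q
    unfolding SQ_def using nc_iff by blast
  have bij: "bij_betw h SQ (A \<times> B)"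
  proof (rule bij_betw_imageI)
    show "inj_on h SQ"
    proof (rule inj_onI)
      fix Q1 Q2 assume "Q1 \<in> SQ" "Q2 \<in> SQ" "h Q1 = h Q2"
      then show "Q1 = Q2" using hinj SQ unfolding h_def by auto
    qed
    show "h ` SQ = A \<times> B"
    proof
      show "h ` SQ \<subseteq> A \<times> B" using hmap SQ unfolding h_def A_def B_def by auto
      show "A \<times> B \<subseteq> h ` SQ"
      proof
        fix z assume "z \<in> A \<times> B"
        then obtain a b where z: "z = (a, b)" "a \<in> A" "b \<in> B" by blast
        then obtain Q where "partition_on {1..n} Q" "ncspec {1..n} Q P" "img (rank p1) (tr Q p1) = a" "map (restr Q) (gl n p1) = b"
          using hsurj unfolding A_def B_def by blast
        then show "z \<in> h ` SQ" using SQ z unfolding h_def by auto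
      qed
    qed
  qed
  have "(\<Sum>Q\<in>SQ. cP c (img (rank p1) (tr Q p1)) * F (map (restr Q) (gl n p1)))
      = (\<Sum>Q\<in>SQ. (\<lambda>(x, y). cP c x * F y) (h Q))" unfolding h_def by simp
  also have "\<dots> = (\<Sum>z\<in>A \<times> B. (\<lambda>(x, y). cP c x * F y) z)" by (rule sum.reindex_bij_betw[OF bij])
  also have "\<dots> = (\<Sum>x\<in>A. \<Sum>y\<in>B. cP c x * F y)" by (simp add: sum.cartesian_product)
  also have "\<dots> = (\<Sum>x\<in>A. cP c x) * (\<Sum>y\<in>B. F y)" by (simp add: sum_product)
  also have "(\<Sum>x\<in>A. cP c x) = kcoef c (card p1)" unfolding kcoef_def A_def by simp
  finally show ?thesis unfolding SQ_def B_def .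
qed

end

lemma restr_part:
  assumes "partition_on {1..n} P" "D \<subseteq> {1..n}" "D \<noteq> {}"
  shows "is_part (restr P D)"
proof -
  have fin: "finite D" using assms(2) finite_subset by blast
  have "partition_on D (tr P D)" by (rule tr_partition[OF assms(1,2)])
  then have "partition_on {1..card D} (img (rank D) (tr P D))"
    using partition_img[OF rank_inj[OF fin]] rank_range[OF fin] by metis
  moreover have "card D \<ge> 1" using fin assms(3) by (simp add: Suc_leI card_gt_0_iff)
  ultimately show ?thesis unfolding is_part_def restr_eq by simp
qed

lemma restr_nc:
  assumes "partition_on {1..n} P" "noncrossing P" "D \<subseteq> {1..n}"
  shows "noncrossing (snd (restr P D))"
proof -
  have fin: "finite D" using assms(3) finite_subset by blast
  have "partition_on D (tr P D)" by (rule tr_partition[OF assms(1,3)])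
  then have U: "\<Union>(tr P D) \<subseteq> D" using partition_onD1 by blast
  have "noncrossing (tr P D)" by (rule tr_nc[OF assms(2)])
  then show ?thesis unfolding restr_eq using noncrossing_img[OF rank_mono[OF fin] U] by simp
qed

lemma ncpre_mpart:
  assumes "is_mpart M" "r \<in> ncpre M"
  shows "is_mpart r"
proof -
  have l: "length r = length M" and e: "\<And>i. i < length M \<Longrightarrow> r ! i \<in> (\<lambda>(n, P). (\<lambda>Q. (n, Q)) ` {Q. partition_on {1..n} Q \<and> nc n Q = P}) (M ! i)"
    using assms(2) unfolding ncpre_def in_listset by auto
  show ?thesis unfolding is_mpart_def
  proof
    fix NP assume "NP \<in> set r"
    then obtain i where i: "i < length r" "NP = r ! i" by (auto simp: in_set_conv_nth)
    obtain m P where MP: "M ! i = (m, P)" by (cases "M ! i")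
    have "is_part (M ! i)" using assms(1) i l unfolding is_mpart_def by simp
    then have "m \<ge> 1" using MP unfolding is_part_def by simp
    moreover obtain Q where "r ! i = (m, Q)" "partition_on {1..m} Q" using e[of i] i l MP by auto
    ultimately show "is_part NP" using i unfolding is_part_def by simp
  qed
qed

lemma ncpre_fin: "is_mpart M \<Longrightarrow> A \<in> set (map (\<lambda>(n, P). (\<lambda>Q. (n, Q)) ` {Q. partition_on {1..n} Q \<and> nc n Q = P}) M) \<Longrightarrow> finite A"
proof -
  assume "A \<in> set (map (\<lambda>(n, P). (\<lambda>Q. (n, Q)) ` {Q. partition_on {1..n} Q \<and> nc n Q = P}) M)"
  then obtain m P where "A = (\<lambda>Q. (m, Q)) ` {Q. partition_on {1..m} Q \<and> nc m Q = P}" by auto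
  moreover have "finite {Q. partition_on {1..m} Q \<and> nc m Q = P}"
    using finitely_many_partition_on[of "{1..m}"] finite_subset by (metis (no_types, lifting) finite_atLeastAtMost mem_Collect_eq subsetI)
  ultimately show "finite A" by simp
qed

lemma ncpre_append_sum:
  assumes "is_mpart A" "is_mpart B"
  shows "sum f (ncpre (A @ B)) = (\<Sum>u\<in>ncpre A. \<Sum>r\<in>ncpre B. f (u @ r))"
  unfolding ncpre_def map_append
  by (rule sum_listset_append) (use ncpre_fin assms in blast)+

definition msize :: "mpart \<Rightarrow> nat" where "msize M = sum_list (map fst M)"

theorem mainTheorem5:
  fixes c :: "nat \<Rightarrow> 'a::field"
    and \<phi> \<psi> :: "mpart \<Rightarrow> 'a"
  assumes phi_eq: "\<And>M. is_nc_mpart M \<Longrightarrow> \<phi> M = eps M + hs (kappa c) \<phi> M"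
    and psi_eq: "\<And>M. is_mpart M \<Longrightarrow> \<psi> M = eps M + hs (gamma c) \<psi> M"
  shows "\<And>M. is_nc_mpart M \<Longrightarrow> \<phi> M = (\<Sum>M'\<in>ncpre M. \<psi> M')"
proof -
  have main: "is_nc_mpart M \<longrightarrow> \<phi> M = (\<Sum>M'\<in>ncpre M. \<psi> M')" for M
  proof (induction "msize M" arbitrary: M rule: less_induct)
    case less
    show ?case
    proof (cases M)
      case Nil
      have "\<phi> [] = 1" using phi_eq[of "[]"] by (simp add: is_nc_mpart_def is_mpart_def eps_def hs_def)
      moreover have "\<psi> [] = 1" using psi_eq[of "[]"] by (simp add: is_mpart_def eps_def hs_def)
      ultimately show ?thesis using Nil by (simp add: ncpre_def)
    next
      case (Cons NP rest)
      obtain n P where NP: "NP = (n, P)" by (cases NP)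
      show ?thesis
      proof
        assume M: "is_nc_mpart M"
        have Mc: "is_nc_mpart ((n, P) # rest)" using M Cons NP by simp
        have Ppart: "partition_on {1..n} P" and Pnc: "noncrossing P" and n1: "n \<ge> 1"
          using Mc unfolding is_nc_mpart_def is_mpart_def is_part_def by auto
        have mrest: "is_mpart rest" and ncrest: "is_nc_mpart rest"
          using Mc unfolding is_nc_mpart_def is_mpart_def by auto
        have "1 \<in> {1..n}" using n1 by simp
        then obtain p1 where p1P: "p1 \<in> P" and one: "1 \<in> p1" using partition_block_ex[OF Ppart] by blast
        have sub: "p1 \<subseteq> {1..n}" using p1_sub[OF Ppart Pnc p1P one] .
        have fin1: "finite p1" using sub finite_subset by blast
        define U where "U = map (restr P) (gl n p1)"
        have Ugl: "\<And>D. D \<in> set (gl n p1) \<Longrightarrow> D \<subseteq> {1..n} \<and> D \<noteq> {}" using gl_props[OF sub] by blast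
        have Unc: "is_nc_mpart U"
          unfolding is_nc_mpart_def is_mpart_def U_def using restr_part[OF Ppart] restr_nc[OF Ppart Pnc] Ugl by auto
        have mU: "is_mpart U" using Unc unfolding is_nc_mpart_def by simp
        have Urest: "is_nc_mpart (U @ rest)" using Unc ncrest unfolding is_nc_mpart_def is_mpart_def by auto
        have "msize U = sum_list (map card (gl n p1))" unfolding msize_def U_def by (simp add: restr_eq comp_def)
        also have "\<dots> \<le> n - card p1" by (rule gl_card[OF sub])
        also have "\<dots> < n"
        proof -
          have "card p1 > 0" using fin1 one card_gt_0_iff by blast
          then show ?thesis using diff_less[of "card p1" n] n1 by simp
        qed
        finally have "msize (U @ rest) < msize M" using Cons NP unfolding msize_def by simp
        then have IH: "\<phi> (U @ rest) = (\<Sum>M'\<in>ncpre (U @ rest). \<psi> M')" using less Urest by blast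
        have "\<phi> M = kcoef c (card p1) * \<phi> (U @ rest)"
          using phi_eq[OF M] hsA[OF Mc p1P one] Cons NP unfolding U_def by (simp add: eps_def)
        also have "\<dots> = kcoef c (card p1) * (\<Sum>u\<in>ncpre U. \<Sum>r\<in>ncpre rest. \<psi> (u @ r))"
          using IH ncpre_append_sum[OF mU mrest, of \<psi>] by simp
        finally have lhs: "\<phi> M = kcoef c (card p1) * (\<Sum>u\<in>ncpre U. \<Sum>r\<in>ncpre rest. \<psi> (u @ r))" .
        define SQ where "SQ = {Q. partition_on {1..n} Q \<and> nc n Q = P}"
        have finSQ: "finite SQ" unfolding SQ_def
          using finitely_many_partition_on[of "{1..n}"] finite_subset by (metis (no_types, lifting) finite_atLeastAtMost mem_Collect_eq subsetI)
        have finR: "finite (ncpre rest)" unfolding ncpre_def by (rule finite_listset) (use ncpre_fin mrest in blast)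
        have ncM: "ncpre M = set_Cons ((\<lambda>Q. (n, Q)) ` SQ) (ncpre rest)"
          unfolding Cons NP ncpre_def SQ_def by simp
        have "(\<Sum>M'\<in>ncpre M. \<psi> M') = (\<Sum>x\<in>(\<lambda>Q. (n, Q)) ` SQ. \<Sum>r\<in>ncpre rest. \<psi> (x # r))"
          unfolding ncM by (rule sum_set_Cons) (use finSQ finR in simp_all)
        also have "\<dots> = (\<Sum>Q\<in>SQ. \<Sum>r\<in>ncpre rest. \<psi> ((n, Q) # r))"
          by (subst sum.reindex) (auto simp: inj_on_def)
        also have "\<dots> = (\<Sum>Q\<in>SQ. cP c (img (rank p1) (tr Q p1)) * (\<Sum>r\<in>ncpre rest. \<psi> (map (restr Q) (gl n p1) @ r)))"
        proof (rule sum.cong[OF refl])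
          fix Q assume "Q \<in> SQ"
          then have Qpart: "partition_on {1..n} Q" and sp: "ncspec {1..n} Q P" unfolding SQ_def using nc_iff by blast+
          have "\<psi> ((n, Q) # r) = cP c (img (rank p1) (tr Q p1)) * \<psi> (map (restr Q) (gl n p1) @ r)"
            if r: "r \<in> ncpre rest" for r
          proof -
            have mr: "is_mpart ((n, Q) # r)" using ncpre_mpart[OF mrest r] Qpart n1 unfolding is_mpart_def is_part_def by simp
            show ?thesis using psi_eq[OF mr] hsB[OF mr sp p1P one] by (simp add: eps_def)
          qed
          then show "(\<Sum>r\<in>ncpre rest. \<psi> ((n, Q) # r)) = cP c (img (rank p1) (tr Q p1)) * (\<Sum>r\<in>ncpre rest. \<psi> (map (restr Q) (gl n p1) @ r))"
            by (simp add: sum_distrib_left)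
        qed
        also have "\<dots> = kcoef c (card p1) * (\<Sum>u\<in>ncpre U. \<Sum>r\<in>ncpre rest. \<psi> (u @ r))"
          unfolding SQ_def U_def by (rule bijC[OF Ppart Pnc p1P one])
        finally show "\<phi> M = (\<Sum>M'\<in>ncpre M. \<psi> M')" using lhs by simp
      qed
    qed
  qed
  fix M assume "is_nc_mpart M"
  then show "\<phi> M = (\<Sum>M'\<in>ncpre M. \<psi> M')" using main by blast
qed

end
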